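(* Every $n$-qubit unitary stabilizer circuit has an equivalent unitary stabilizer circuit with only $O(n^2/\log n)$ gates.
   Context: A unitary stabilizer circuit is a circuit consisting only of CNOT, Hadamard and phase ($\mathrm{diag}(1,i)$) gates. Two such circuits are equivalent if the unitaries they implement agree up to a global phase. *)

theory Defs
  imports Complex_Main "Jordan_Normal_Form.Matrix"
begin

text \<open>Gates of a unitary stabilizer circuit on qubits 0..n-1.
  CNOT c t has control c and target t.\<close>
datatype gate = H nat | S nat | CNOT nat nat

text \<open>Computational basis states of n qubits are indexed by 0..2^n-1;
  qubit q of basis index j is bit q of j.\<close>
definition bit :: "nat \<Rightarrow> nat \<Rightarrow> bool" where
  "bit j q = odd (j div 2 ^ q)"

definition flip :: "nat \<Rightarrow> nat \<Rightarrow> nat" where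
  "flip j q = (if bit j q then j - 2 ^ q else j + 2 ^ q)"

definition agree_except :: "nat \<Rightarrow> nat \<Rightarrow> nat \<Rightarrow> bool" where
  "agree_except i j q = (\<forall>k. k \<noteq> q \<longrightarrow> bit i k = bit j k)"

definition wf_gate :: "nat \<Rightarrow> gate \<Rightarrow> bool" where
  "wf_gate n g = (case g of H q \<Rightarrow> q < n | S q \<Rightarrow> q < n
     | CNOT c t \<Rightarrow> c < n \<and> t < n \<and> c \<noteq> t)"

definition wf_circuit :: "nat \<Rightarrow> gate list \<Rightarrow> bool" where
  "wf_circuit n gs = (\<forall>g\<in>set gs. wf_gate n g)"

text \<open>Matrix entry (i,j) = <i| G |j>.  Hadamard, phase diag(1,i), CNOT.\<close>
definition gate_entry :: "gate \<Rightarrow> nat \<Rightarrow> nat \<Rightarrow> complex" where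
  "gate_entry g i j = (case g of
      H q \<Rightarrow> (if agree_except i j q
               then (if bit i q \<and> bit j q then -1 else 1) / complex_of_real (sqrt 2)
               else 0)
    | S q \<Rightarrow> (if i = j then (if bit j q then \<i> else 1) else 0)
    | CNOT c t \<Rightarrow> (if i = (if bit j c then flip j t else j) then 1 else 0))"

definition gate_mat :: "nat \<Rightarrow> gate \<Rightarrow> complex mat" where
  "gate_mat n g = mat (2 ^ n) (2 ^ n) (\<lambda>(i, j). gate_entry g i j)"

text \<open>Gates are applied left to right: the first gate of the list acts first.\<close>
fun circuit_mat :: "nat \<Rightarrow> gate list \<Rightarrow> complex mat" where
  "circuit_mat n [] = 1\<^sub>m (2 ^ n)"
| "circuit_mat n (g # gs) = circuit_mat n gs * gate_mat n g"

definition equiv_circuits :: "nat \<Rightarrow> gate list \<Rightarrow> gate list \<Rightarrow> bool" where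
  "equiv_circuits n c1 c2 =
     (\<exists>z::complex. cmod z = 1 \<and> circuit_mat n c1 = z \<cdot>\<^sub>m circuit_mat n c2)"

end

theory Submission
  imports Defs
begin

unbundle bit_operations_syntax

abbreviation bt :: "nat \<Rightarrow> nat \<Rightarrow> bool" where "bt \<equiv> Bit_Operations.bit"

lemma bitD[simp]: "Defs.bit j q = bt j q"
  by (simp add: Defs.bit_def bit_iff_odd)

lemma setb: "\<not> bt (j::nat) q \<Longrightarrow> j + 2^q = j XOR 2^q"
proof -
  assume a: "\<not> bt (j::nat) q"
  have "set_bit q j = j XOR 2^q"
    by (rule bit_eqI) (auto simp: bit_set_bit_iff bit_xor_iff bit_exp_iff a)
  then show ?thesis using set_bit_eq[of q j] a by simp
qed

lemma flipD: "flip j q = j XOR 2^q"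
proof (cases "bt j q")
  case True
  define j' where "j' = unset_bit q j"
  have nb: "\<not> bt j' q" by (simp add: j'_def bit_unset_bit_iff)
  have "j' XOR 2^q = j"
    by (rule bit_eqI) (auto simp: j'_def bit_unset_bit_iff bit_xor_iff bit_exp_iff True)
  then have "j XOR 2^q = j'" by (metis xor.assoc xor_self_eq xor.right_neutral)
  moreover have "j = j' + 2^q" using setb[OF nb] \<open>j' XOR 2^q = j\<close> by simp
  ultimately show ?thesis using True by (simp add: flip_def)
next
  case False
  then show ?thesis by (simp add: flip_def setb)
qed

lemma lt2D: "(x::nat) < 2^n \<Longrightarrow> bt x q \<Longrightarrow> q < n"
  by (metis bit_take_bit_iff take_bit_nat_eq_self_iff)

lemma lt2I: "(\<And>q. bt (x::nat) q \<Longrightarrow> q < n) \<Longrightarrow> x < 2^n"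
proof -
  assume a: "\<And>q. bt (x::nat) q \<Longrightarrow> q < n"
  have "take_bit n x = x" by (rule bit_eqI) (auto simp: bit_take_bit_iff dest: a)
  then show ?thesis by (metis take_bit_nat_eq_self_iff)
qed

lemma xor_lt[simp]: "(x::nat) < 2^n \<Longrightarrow> y < 2^n \<Longrightarrow> x XOR y < 2^n"
  by (rule lt2I) (auto simp: bit_xor_iff dest: lt2D)

lemma exp_lt[simp]: "q < n \<Longrightarrow> (2::nat)^q < 2^n"
  by simp

lemma and_lt[simp]: "(x::nat) < 2^n \<Longrightarrow> y AND x < 2^n"
  by (rule lt2I) (auto simp: bit_and_iff dest: lt2D)

lemma bit_eq_lt: "(x::nat) < 2^n \<Longrightarrow> y < 2^n \<Longrightarrow> (\<And>q. q < n \<Longrightarrow> bt x q = bt y q) \<Longrightarrow> x = y"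
  by (rule bit_eqI) (metis lt2D)

fun par :: "nat \<Rightarrow> nat \<Rightarrow> bool" where
  "par 0 x = False"
| "par (Suc n) x = (par n x \<noteq> bt x n)"

lemma par_xor: "par n (x XOR y) = (par n x \<noteq> par n y)"
  by (induction n) (auto simp: bit_xor_iff)

lemma par_0[simp]: "par n 0 = False"
  by (induction n) auto

lemma par_exp: "par n (2^q) = (q < n)"
  by (induction n) (auto simp: bit_exp_iff)

lemma par_and_exp: "par n (x AND 2^q) = (q < n \<and> bt x q)"
proof -
  have "x AND 2^q = (if bt x q then 2^q else 0)"
    by (rule bit_eqI) (auto simp: bit_and_iff bit_exp_iff)
  then show ?thesis by (simp add: par_exp)
qed

lemma and_xor_distrib: "(x::nat) AND (y XOR z) = (x AND y) XOR (x AND z)"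
  by (rule bit_eqI) (auto simp: bit_and_iff bit_xor_iff)

lemma and_xor_distrib2: "((y::nat) XOR z) AND x = (y AND x) XOR (z AND x)"
  by (rule bit_eqI) (auto simp: bit_and_iff bit_xor_iff)

definition sg :: "nat \<Rightarrow> nat \<Rightarrow> nat \<Rightarrow> complex" where
  "sg n b j = (if par n (b AND j) then -1 else 1)"

lemma sg_xor_right: "sg n b (j XOR y) = sg n b j * sg n b y"
  by (simp add: sg_def and_xor_distrib par_xor)

lemma sg_xor_left: "sg n (b XOR y) j = sg n b j * sg n y j"
  by (simp add: sg_def and_xor_distrib2 par_xor)

lemma sg_exp_right: "sg n b (2^q) = (if q < n \<and> bt b q then -1 else 1)"
  by (simp add: sg_def par_and_exp)

lemma sg_exp_left: "sg n (2^q) j = (if q < n \<and> bt j q then -1 else 1)"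
  by (simp add: sg_def par_and_exp and.commute)

lemma sg_0[simp]: "sg n 0 j = 1" "sg n b 0 = 1"
  by (auto simp: sg_def)

lemma sg_sq[simp]: "sg n b j * sg n b j = 1"
  by (simp add: sg_def)

definition pm :: "nat \<Rightarrow> nat \<Rightarrow> nat \<Rightarrow> complex mat" where
  "pm n a b = mat (2^n) (2^n) (\<lambda>(i,j). if i = j XOR a then sg n b j else 0)"

lemma pm_carrier[simp]: "pm n a b \<in> carrier_mat (2^n) (2^n)"
  by (simp add: pm_def)

lemma pm_dim[simp]: "dim_row (pm n a b) = 2^n" "dim_col (pm n a b) = 2^n"
  by (auto simp: pm_def)

lemma gate_carrier[simp]: "gate_mat n g \<in> carrier_mat (2^n) (2^n)"
  by (simp add: gate_mat_def)

lemma gate_dim[simp]: "dim_row (gate_mat n g) = 2^n" "dim_col (gate_mat n g) = 2^n"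
  by (auto simp: gate_mat_def)

lemma circuit_carrier[simp]: "circuit_mat n c \<in> carrier_mat (2^n) (2^n)"
  by (induction c) auto

lemma circuit_dim[simp]: "dim_row (circuit_mat n c) = 2^n" "dim_col (circuit_mat n c) = 2^n"
  using circuit_carrier[of n c] by (auto simp del: circuit_carrier)

lemma mult_mono_right:
  assumes A: "A \<in> carrier_mat N N" and B: "B \<in> carrier_mat N N" and ij: "i < N" "j < N" "p < N"
    and Bj: "\<And>k. k < N \<Longrightarrow> B $$ (k,j) = (if k = p then c else 0)"
  shows "(A*B) $$ (i,j) = A $$ (i, p) * c"
proof -
  have "(A*B) $$ (i,j) = (\<Sum>k\<in>{0..<N}. A$$(i,k) * B$$(k,j))"
    using A B ij by (simp add: scalar_prod_def)
  also have "\<dots> = (\<Sum>k\<in>{0..<N}. if k = p then A$$(i,k) * c else 0)"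
    by (rule sum.cong) (auto simp: Bj)
  also have "\<dots> = A$$(i,p) * c" using ij by (simp add: sum.delta)
  finally show ?thesis .
qed

lemma mult_mono_left:
  assumes A: "A \<in> carrier_mat N N" and B: "B \<in> carrier_mat N N" and ij: "i < N" "j < N" "p < N"
    and Ai: "\<And>k. k < N \<Longrightarrow> A $$ (i,k) = (if k = p then c else 0)"
  shows "(A*B) $$ (i,j) = c * B $$ (p, j)"
proof -
  have "(A*B) $$ (i,j) = (\<Sum>k\<in>{0..<N}. A$$(i,k) * B$$(k,j))"
    using A B ij by (simp add: scalar_prod_def)
  also have "\<dots> = (\<Sum>k\<in>{0..<N}. if k = p then c * B$$(k,j) else 0)"
    by (rule sum.cong) (auto simp: Ai)
  also have "\<dots> = c * B$$(p,j)" using ij by (simp add: sum.delta)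
  finally show ?thesis .
qed

lemma pm_index: "i < 2^n \<Longrightarrow> j < 2^n \<Longrightarrow> pm n a b $$ (i,j) = (if i = j XOR a then sg n b j else 0)"
  by (simp add: pm_def)

lemma xor_eq_iff: "(i::nat) = j XOR a \<longleftrightarrow> j = i XOR a"
  by (metis xor.assoc xor_self_eq xor.right_neutral)

lemma mult_pm_right:
  assumes "A \<in> carrier_mat (2^n) (2^n)" "i < 2^n" "j < 2^n" "a < 2^n"
  shows "(A * pm n a b) $$ (i,j) = A $$ (i, j XOR a) * sg n b j"
  by (rule mult_mono_right[OF assms(1) pm_carrier]) (use assms in \<open>auto simp: pm_index\<close>)

lemma mult_pm_left:
  assumes "B \<in> carrier_mat (2^n) (2^n)" "i < 2^n" "j < 2^n" "a < 2^n"
  shows "(pm n a b * B) $$ (i,j) = sg n b (i XOR a) * B $$ (i XOR a, j)"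
  by (rule mult_mono_left[OF pm_carrier assms(1)]) (use assms in \<open>auto simp: pm_index xor_eq_iff\<close>)

definition cx :: "nat \<Rightarrow> nat \<Rightarrow> nat \<Rightarrow> nat" where
  "cx c t x = (if bt x c then x XOR 2^t else x)"

lemma bt_cx: "c \<noteq> t \<Longrightarrow> bt (cx c t x) k = (if k = t then bt x t \<noteq> bt x c else bt x k)"
  by (auto simp: cx_def bit_xor_iff bit_exp_iff)

lemma cx_inv[simp]: "c \<noteq> t \<Longrightarrow> cx c t (cx c t x) = x"
  by (rule bit_eqI) (auto simp: bt_cx)

lemma cx_xor: "c \<noteq> t \<Longrightarrow> cx c t (x XOR y) = cx c t x XOR cx c t y"
  by (rule bit_eqI) (auto simp: bt_cx bit_xor_iff)

lemma cx_lt[simp]: "c < n \<Longrightarrow> t < n \<Longrightarrow> x < 2^n \<Longrightarrow> cx c t x < 2^n"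
  by (simp add: cx_def)

lemma cx_eq_iff: "c \<noteq> t \<Longrightarrow> (i = cx c t k) = (k = cx c t i)"
  by auto

fun fg :: "gate \<Rightarrow> nat \<times> nat \<Rightarrow> nat \<times> nat" where
  "fg (H q) (a,b) = (if bt a q \<noteq> bt b q then (a XOR 2^q, b XOR 2^q) else (a,b))"
| "fg (S q) (a,b) = (a, if bt a q then b XOR 2^q else b)"
| "fg (CNOT c t) (a,b) = (cx c t a, cx t c b)"

lemma S_index: "i < 2^n \<Longrightarrow> j < 2^n \<Longrightarrow>
   gate_mat n (S q) $$ (i,j) = (if i = j then (if bt j q then \<i> else 1) else 0)"
  by (simp add: gate_mat_def gate_entry_def)

lemma CX_index: "i < 2^n \<Longrightarrow> j < 2^n \<Longrightarrow>
   gate_mat n (CNOT c t) $$ (i,j) = (if i = cx c t j then 1 else 0)"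
  by (simp add: gate_mat_def gate_entry_def cx_def flipD)

lemma agree_iff: "agree_except i j q = (j = i \<or> j = i XOR 2^q)"
proof
  assume a: "agree_except i j q"
  show "j = i \<or> j = i XOR 2^q"
  proof (cases "bt i q = bt j q")
    case True
    then have "j = i" using a by (auto simp: agree_except_def intro!: bit_eqI)
    then show ?thesis by simp
  next
    case False
    then have "j = i XOR 2^q" using a
      by (intro bit_eqI) (auto simp: agree_except_def bit_xor_iff bit_exp_iff)
    then show ?thesis by simp
  qed
next
  assume "j = i \<or> j = i XOR 2^q"
  then show "agree_except i j q"
    by (auto simp: agree_except_def bit_xor_iff bit_exp_iff)
qed

definition hh :: "nat \<Rightarrow> nat \<Rightarrow> nat \<Rightarrow> complex" where
  "hh q i j = (if j = i \<or> j = i XOR 2^q then (if bt i q \<and> bt j q then -1 else 1) / complex_of_real (sqrt 2) else 0)"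

lemma H_index: "i < 2^n \<Longrightarrow> j < 2^n \<Longrightarrow> gate_mat n (H q) $$ (i,j) = hh q i j"
  by (simp add: gate_mat_def gate_entry_def agree_iff hh_def)

lemma xor_cancel: "(x::nat) XOR y XOR y = x" "y XOR (y XOR x) = x" "x XOR y XOR x = y"
  by (metis xor.assoc xor.commute xor_self_eq xor.left_neutral xor.right_neutral)+

lemma eq_matI2: "A \<in> carrier_mat N N \<Longrightarrow> B \<in> carrier_mat N N \<Longrightarrow> (\<And>i j. i<N \<Longrightarrow> j<N \<Longrightarrow> A$$(i,j) = B$$(i,j)) \<Longrightarrow> A = B"
  by (rule eq_matI) auto

lemma sg_cx: "c < n \<Longrightarrow> t < n \<Longrightarrow> c \<noteq> t \<Longrightarrow> sg n (cx t c b) (cx c t j) = sg n b j"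
proof -
  assume ct: "c < n" "t < n" "c \<noteq> t"
  have "cx t c b AND cx c t j = (b AND j) XOR (if bt b t \<and> bt j c then 2^c XOR 2^t else 0)"
    by (rule bit_eqI) (use ct in \<open>auto simp: bt_cx bit_and_iff bit_xor_iff bit_exp_iff\<close>)
  then show ?thesis using ct by (simp add: sg_def par_xor par_exp)
qed

lemma conj_S:
  assumes "q < n" "a < 2^n" "b < 2^n"
  shows "gate_mat n (S q) * pm n a b = (if bt a q then \<i> else 1) \<cdot>\<^sub>m (pm n a (snd (fg (S q) (a,b))) * gate_mat n (S q))"
proof -
  define b' where "b' = (if bt a q then b XOR 2^q else b)"
  have fgS: "snd (fg (S q) (a,b)) = b'" by (simp add: b'_def)
  have b'lt: "b' < 2^n" using assms by (simp add: b'_def)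
  show ?thesis unfolding fgS
  proof (rule eq_matI2[where N="2^n"])
    fix i j :: nat assume ij: "i < 2^n" "j < 2^n"
    have L: "(gate_mat n (S q) * pm n a b) $$ (i,j) = gate_mat n (S q) $$ (i, j XOR a) * sg n b j"
      using assms ij by (intro mult_pm_right) auto
    have R: "(pm n a b' * gate_mat n (S q)) $$ (i,j)
       = pm n a b' $$ (i,j) * (if bt j q then \<i> else 1)"
      using assms ij by (intro mult_mono_right[where p=j]) (auto simp: S_index)
    have "gate_mat n (S q) $$ (i, j XOR a) * sg n b j = (if bt a q then \<i> else 1) * (pm n a b' $$ (i,j) * (if bt j q then \<i> else 1))"
      using ij assms by (simp add: b'_def S_index pm_index sg_xor_left sg_exp_left bit_xor_iff) (auto simp: algebra_simps)
    then show "(gate_mat n (S q) * pm n a b) $$ (i,j) = ((if bt a q then \<i> else 1) \<cdot>\<^sub>m (pm n a b' * gate_mat n (S q))) $$ (i,j)"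
      using ij unfolding L by (subst index_smult_mat) (auto simp: R simp del: index_mult_mat(1))
  qed (use b'lt in auto)
qed

lemma conj_CX:
  assumes "c < n" "t < n" "c \<noteq> t" "a < 2^n" "b < 2^n"
  shows "gate_mat n (CNOT c t) * pm n a b = 1 \<cdot>\<^sub>m (pm n (cx c t a) (cx t c b) * gate_mat n (CNOT c t))"
proof (rule eq_matI2[where N="2^n"])
  fix i j :: nat assume ij: "i < 2^n" "j < 2^n"
  have L: "(gate_mat n (CNOT c t) * pm n a b) $$ (i,j) = 1 * pm n a b $$ (cx c t i, j)"
    using assms ij by (intro mult_mono_left) (auto simp: CX_index cx_eq_iff)
  have R: "(pm n (cx c t a) (cx t c b) * gate_mat n (CNOT c t)) $$ (i,j)
     = pm n (cx c t a) (cx t c b) $$ (i,cx c t j) * 1"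
    using assms ij by (intro mult_mono_right) (auto simp: CX_index)
  have e: "(cx c t i = j XOR a) = (i = cx c t j XOR cx c t a)"
    using assms by (metis cx_inv cx_xor)
  show "(gate_mat n (CNOT c t) * pm n a b) $$ (i,j) = (1 \<cdot>\<^sub>m (pm n (cx c t a) (cx t c b) * gate_mat n (CNOT c t))) $$ (i,j)"
    using ij assms unfolding L by (simp add: R pm_index e sg_cx)
qed auto

lemma conj_H:
  assumes "q < n" "a < 2^n" "b < 2^n"
  shows "gate_mat n (H q) * pm n a b = (if bt a q \<and> bt b q then -1 else 1) \<cdot>\<^sub>m (pm n (fst (fg (H q) (a,b))) (snd (fg (H q) (a,b))) * gate_mat n (H q))"
proof (rule eq_matI2[where N="2^n"])
  define e where "e = (if bt a q \<noteq> bt b q then 2^q else (0::nat))"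
  have fe: "fg (H q) (a,b) = (a XOR e, b XOR e)" by (simp add: e_def)
  have e_lt: "e < 2^n" using assms by (simp add: e_def)
  have bte: "\<And>k. bt e k = (k = q \<and> bt a q \<noteq> bt b q)" by (auto simp: e_def bit_exp_iff)
  fix i j :: nat assume ij: "i < 2^n" "j < 2^n"
  have L: "(gate_mat n (H q) * pm n a b) $$ (i,j) = hh q i (j XOR a) * sg n b j"
    using assms ij by (subst mult_pm_right) (auto simp: H_index)
  have R: "(pm n (a XOR e) (b XOR e) * gate_mat n (H q)) $$ (i,j)
     = sg n (b XOR e) (i XOR (a XOR e)) * hh q (i XOR (a XOR e)) j"
    using assms ij e_lt by (subst mult_pm_left) (auto simp: H_index)
  have "hh q i (j XOR a) * sg n b j = (if bt a q \<and> bt b q then -1 else 1) * (sg n (b XOR e) (i XOR (a XOR e)) * hh q (i XOR (a XOR e)) j)"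
  proof (cases "j XOR a = i")
    case True
    then have i: "i = j XOR a" by simp
    show ?thesis unfolding i using assms
      by (auto simp: hh_def sg_xor_left sg_xor_right sg_exp_left sg_exp_right bit_xor_iff bit_exp_iff e_def xor_cancel xor.assoc)
  next
    case F1: False
    show ?thesis
    proof (cases "j XOR a = i XOR 2^q")
      case True
      have "i = (i XOR 2^q) XOR 2^q" by (simp add: xor.assoc)
      also have "\<dots> = (j XOR a) XOR 2^q" using True by simp
      also have "\<dots> = j XOR a XOR 2^q" by (simp add: xor.assoc)
      finally have i: "i = j XOR a XOR 2^q" .
      show ?thesis unfolding i using assms
        by (auto simp: hh_def sg_xor_left sg_xor_right sg_exp_left sg_exp_right bit_xor_iff bit_exp_iff e_def xor_cancel xor.assoc)
    next
      case False
      have "j \<noteq> i XOR (a XOR e) \<and> j \<noteq> (i XOR (a XOR e)) XOR 2^q"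
        using F1 False by (auto simp: e_def xor.assoc xor.left_commute xor.commute xor_cancel split: if_splits)
      then show ?thesis using F1 False by (simp add: hh_def)
    qed
  qed
  then show "(gate_mat n (H q) * pm n a b) $$ (i,j) = ((if bt a q \<and> bt b q then -1 else 1) \<cdot>\<^sub>m (pm n (fst (fg (H q) (a,b))) (snd (fg (H q) (a,b))) * gate_mat n (H q))) $$ (i,j)"
    using ij unfolding L fe by (simp add: R)
qed auto

lemma xorx[simp]: "((x::nat) XOR y) XOR y = x" "(y XOR x) XOR y = x" "y XOR (y XOR x) = x" "y XOR (x XOR y) = x"
  by (metis xor.assoc xor.commute xor_self_eq xor.left_neutral xor.right_neutral)+

lemma assoc2: "A \<in> carrier_mat N N \<Longrightarrow> B \<in> carrier_mat N N \<Longrightarrow> C \<in> carrier_mat N N \<Longrightarrow> A * B * C = A * (B * C)"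
  by (rule assoc_mult_mat) auto

lemma msd: "A \<in> carrier_mat N N \<Longrightarrow> B \<in> carrier_mat N N \<Longrightarrow> A * (k \<cdot>\<^sub>m B) = (k::complex) \<cdot>\<^sub>m (A * B)"
  by (rule mult_smult_distrib) auto

lemma msa: "A \<in> carrier_mat N N \<Longrightarrow> B \<in> carrier_mat N N \<Longrightarrow> (k \<cdot>\<^sub>m A) * B = (k::complex) \<cdot>\<^sub>m (A * B)"
  by (rule mult_smult_assoc_mat) auto

lemma mcarr: "A \<in> carrier_mat N N \<Longrightarrow> B \<in> carrier_mat N N \<Longrightarrow> A * B \<in> carrier_mat N N"
  by auto

lemmas carr0 = pm_carrier gate_carrier circuit_carrier mcarr smult_carrier_mat

lemma smult_smult_mat: "a \<cdot>\<^sub>m (b \<cdot>\<^sub>m A) = (a * b :: complex) \<cdot>\<^sub>m A"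
  by (rule eq_matI) auto

lemma fg_lt:
  assumes "wf_gate n g" "a < 2^n" "b < 2^n"
  shows "fst (fg g (a,b)) < 2^n \<and> snd (fg g (a,b)) < 2^n"
proof (cases g)
  case (H q) then show ?thesis using assms by (simp add: wf_gate_def)
next
  case (S q) then show ?thesis using assms by (simp add: wf_gate_def)
next
  case (CNOT c t) then show ?thesis using assms by (simp add: wf_gate_def)
qed

lemma gate_conj:
  assumes "wf_gate n g" "a < 2^n" "b < 2^n"
  shows "\<exists>l. cmod l = 1 \<and> gate_mat n g * pm n a b = l \<cdot>\<^sub>m (pm n (fst (fg g (a,b))) (snd (fg g (a,b))) * gate_mat n g)"
proof (cases g)
  case (H q)
  then show ?thesis using conj_H[of q n a b] assms
    by (intro exI[of _ "if bt a q \<and> bt b q then -1 else 1"]) (auto simp: wf_gate_def)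
next
  case (S q)
  then show ?thesis using conj_S[of q n a b] assms
    by (intro exI[of _ "if bt a q then \<i> else 1"]) (auto simp: wf_gate_def)
next
  case (CNOT c t)
  then show ?thesis using conj_CX[of c n t a b] assms
    by (intro exI[of _ 1]) (auto simp: wf_gate_def)
qed

fun fc :: "gate list \<Rightarrow> nat \<times> nat \<Rightarrow> nat \<times> nat" where
  "fc [] v = v"
| "fc (g # gs) v = fc gs (fg g v)"

lemma fc_append: "fc (x @ y) v = fc y (fc x v)"
  by (induction x arbitrary: v) auto

lemma fc_lt:
  assumes "wf_circuit n c" "a < 2^n" "b < 2^n"
  shows "fst (fc c (a,b)) < 2^n \<and> snd (fc c (a,b)) < 2^n"
  using assms
proof (induction c arbitrary: a b)
  case Nil then show ?case by simp
next
  case (Cons g gs)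
  have "wf_gate n g" "wf_circuit n gs" using Cons.prems by (auto simp: wf_circuit_def)
  then show ?case using Cons fg_lt[of n g a b] by (cases "fg g (a,b)") auto
qed

lemma circ_conj:
  assumes "wf_circuit n c" "a < 2^n" "b < 2^n"
  shows "\<exists>l. cmod l = 1 \<and> circuit_mat n c * pm n a b = l \<cdot>\<^sub>m (pm n (fst (fc c (a,b))) (snd (fc c (a,b))) * circuit_mat n c)"
  using assms
proof (induction c arbitrary: a b)
  case Nil then show ?case by (intro exI[of _ 1]) auto
next
  case (Cons g gs)
  have wg: "wf_gate n g" and wgs: "wf_circuit n gs" using Cons.prems by (auto simp: wf_circuit_def)
  obtain a' b' where ab': "fg g (a,b) = (a',b')" by (cases "fg g (a,b)")
  have lt: "a' < 2^n" "b' < 2^n" using fg_lt[OF wg Cons.prems(2,3)] ab' by auto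
  obtain l1 where l1: "cmod l1 = 1" "gate_mat n g * pm n a b = l1 \<cdot>\<^sub>m (pm n a' b' * gate_mat n g)"
    using gate_conj[OF wg Cons.prems(2,3)] ab' by auto
  obtain l2 where l2: "cmod l2 = 1" "circuit_mat n gs * pm n a' b' = l2 \<cdot>\<^sub>m (pm n (fst (fc gs (a',b'))) (snd (fc gs (a',b'))) * circuit_mat n gs)"
    using Cons.IH[OF wgs lt] by auto
  define P where "P = pm n (fst (fc gs (a',b'))) (snd (fc gs (a',b')))"
  have PC: "P \<in> carrier_mat (2^n) (2^n)" by (simp add: P_def)
  have "circuit_mat n (g # gs) * pm n a b = circuit_mat n gs * (gate_mat n g * pm n a b)"
    by (simp add: assoc2[where N="2^n"])
  also have "\<dots> = circuit_mat n gs * (l1 \<cdot>\<^sub>m (pm n a' b' * gate_mat n g))" by (simp add: l1)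
  also have "\<dots> = l1 \<cdot>\<^sub>m ((circuit_mat n gs * pm n a' b') * gate_mat n g)"
    by (simp only: msd[where N="2^n"] assoc2[where N="2^n"] carr0)
  also have "\<dots> = l1 \<cdot>\<^sub>m ((l2 \<cdot>\<^sub>m (P * circuit_mat n gs)) * gate_mat n g)" by (simp add: l2 P_def)
  also have "\<dots> = (l1 * l2) \<cdot>\<^sub>m (P * circuit_mat n (g # gs))"
    using PC by (simp only: msa[where N="2^n"] assoc2[where N="2^n"] carr0 smult_smult_mat circuit_mat.simps)
  finally show ?case using l1 l2 ab' by (intro exI[of _ "l1 * l2"]) (auto simp: P_def norm_mult)
qed

lemma circuit_mat_append: "circuit_mat n (x @ y) = circuit_mat n y * circuit_mat n x"
  by (induction x) (auto simp: assoc_mult_mat[OF circuit_carrier circuit_carrier gate_carrier])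

definition adj :: "complex mat \<Rightarrow> complex mat" where
  "adj M = mat (dim_col M) (dim_row M) (\<lambda>(i,j). cnj (M $$ (j,i)))"

lemma adj_carrier[simp]: "M \<in> carrier_mat a b \<Longrightarrow> adj M \<in> carrier_mat b a"
  by (auto simp: adj_def)

lemma adj_index: "i < dim_col M \<Longrightarrow> j < dim_row M \<Longrightarrow> adj M $$ (i,j) = cnj (M $$ (j,i))"
  by (simp add: adj_def)

lemma adj_dim[simp]: "dim_row (adj M) = dim_col M" "dim_col (adj M) = dim_row M"
  by (auto simp: adj_def)

lemma adj_mult:
  assumes "A \<in> carrier_mat N N" "B \<in> carrier_mat N N"
  shows "adj (A * B) = adj B * adj A"
proof (rule eq_matI2[where N=N])
  fix i j assume ij: "i < N" "j < N"
  have "adj (A * B) $$ (i,j) = cnj (\<Sum>k\<in>{0..<N}. A $$ (j,k) * B $$ (k,i))"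
    using assms ij by (simp add: adj_index scalar_prod_def)
  also have "\<dots> = (\<Sum>k\<in>{0..<N}. adj B $$ (i,k) * adj A $$ (k,j))"
    using assms ij by (simp add: adj_index cnj_sum mult.commute)
  also have "\<dots> = (adj B * adj A) $$ (i,j)"
    using assms ij by (simp add: scalar_prod_def)
  finally show "adj (A * B) $$ (i,j) = (adj B * adj A) $$ (i,j)" .
qed (use assms in auto)

lemma adj_smult: "adj (k \<cdot>\<^sub>m A) = cnj k \<cdot>\<^sub>m adj A"
  by (rule eq_matI) (auto simp: adj_def)

lemma sum_two:
  assumes "finite A" "p1 \<in> A" "p2 \<in> A" "p1 \<noteq> p2" "\<And>k. k \<in> A \<Longrightarrow> k \<noteq> p1 \<Longrightarrow> k \<noteq> p2 \<Longrightarrow> f k = 0"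
  shows "sum f A = f p1 + f p2"
proof -
  have "sum f A = sum f {p1,p2}"
    by (rule sum.mono_neutral_right) (use assms in auto)
  then show ?thesis using assms by simp
qed

lemma sqrt2c: "complex_of_real (sqrt 2) * complex_of_real (sqrt 2) = 2"
proof -
  have "complex_of_real (sqrt 2) * complex_of_real (sqrt 2) = complex_of_real (sqrt 2 * sqrt 2)"
    by (simp only: of_real_mult)
  then show ?thesis by simp
qed

lemma hh_sym: "hh q i j = hh q j i"
  by (auto simp: hh_def xor_cancel)

lemma HH:
  assumes "q < n"
  shows "gate_mat n (H q) * gate_mat n (H q) = 1\<^sub>m (2^n)"
proof (rule eq_matI2[where N="2^n"])
  fix i j :: nat assume ij: "i < 2^n" "j < 2^n"
  define e :: nat where "e = 2^q"
  have ie: "i XOR e < 2^n" using ij assms by (simp add: e_def)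
  have "bt (i XOR e) q \<noteq> bt i q" by (simp add: e_def bit_xor_iff bit_exp_iff)
  then have ne: "i \<noteq> i XOR e" by metis
  have "(gate_mat n (H q) * gate_mat n (H q)) $$ (i,j) = (\<Sum>k\<in>{0..<2^n}. hh q i k * hh q k j)"
    using ij by (simp add: scalar_prod_def H_index)
  also have "\<dots> = hh q i i * hh q i j + hh q i (i XOR e) * hh q (i XOR e) j"
    by (rule sum_two) (use ij ie ne in \<open>auto simp: hh_def e_def\<close>)
  also have "\<dots> = (if i = j then 1 else 0)"
  proof -
    have r: "complex_of_real (sqrt 2) \<noteq> 0" by simp
    have b: "bt (i XOR e) q = (\<not> bt i q)" by (simp add: e_def bit_xor_iff bit_exp_iff)
    show ?thesis
    proof (cases "j = i")
      case True
      then show ?thesis using b sqrt2c by (auto simp: hh_def e_def xor_cancel field_simps)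
    next
      case F: False
      show ?thesis
      proof (cases "j = i XOR e")
        case True
        then show ?thesis using b ne by (auto simp: hh_def e_def xor_cancel)
      next
        case False
        then show ?thesis using F by (auto simp: hh_def e_def xor_cancel)
      qed
    qed
  qed
  finally show "(gate_mat n (H q) * gate_mat n (H q)) $$ (i,j) = 1\<^sub>m (2^n) $$ (i,j)" using ij by simp
qed auto

lemma adj_H: "adj (gate_mat n (H q)) = gate_mat n (H q)"
  by (rule eq_matI) (auto simp: adj_def H_index hh_sym hh_def)

lemma adj_CX: "c \<noteq> t \<Longrightarrow> adj (gate_mat n (CNOT c t)) = gate_mat n (CNOT c t)"
  by (rule eq_matI) (auto simp: adj_def CX_index)

lemma CXCX:
  assumes "c < n" "t < n" "c \<noteq> t"
  shows "gate_mat n (CNOT c t) * gate_mat n (CNOT c t) = 1\<^sub>m (2^n)"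
proof (rule eq_matI2[where N="2^n"])
  fix i j :: nat assume ij: "i < 2^n" "j < 2^n"
  have "(gate_mat n (CNOT c t) * gate_mat n (CNOT c t)) $$ (i,j) = gate_mat n (CNOT c t) $$ (i, cx c t j) * 1"
    using ij assms by (intro mult_mono_right) (auto simp: CX_index)
  then show "(gate_mat n (CNOT c t) * gate_mat n (CNOT c t)) $$ (i,j) = 1\<^sub>m (2^n) $$ (i,j)"
    using ij assms by (auto simp: CX_index)
qed auto

definition sdiag :: "nat \<Rightarrow> nat \<Rightarrow> complex" where "sdiag q j = (if bt j q then \<i> else 1)"

lemma adj_S_index: "i < 2^n \<Longrightarrow> j < 2^n \<Longrightarrow> adj (gate_mat n (S q)) $$ (i,j) = (if i = j then cnj (sdiag q j) else 0)"
  by (simp add: adj_index S_index sdiag_def)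

lemma SS_unit:
  shows "adj (gate_mat n (S q)) * gate_mat n (S q) = 1\<^sub>m (2^n)"
    and "gate_mat n (S q) * adj (gate_mat n (S q)) = 1\<^sub>m (2^n)"
proof -
  show "adj (gate_mat n (S q)) * gate_mat n (S q) = 1\<^sub>m (2^n)"
  proof (rule eq_matI2[where N="2^n"])
    fix i j :: nat assume ij: "i < 2^n" "j < 2^n"
    have "(adj (gate_mat n (S q)) * gate_mat n (S q)) $$ (i,j) = adj (gate_mat n (S q)) $$ (i, j) * sdiag q j"
      using ij by (intro mult_mono_right) (auto simp: S_index sdiag_def)
    then show "(adj (gate_mat n (S q)) * gate_mat n (S q)) $$ (i,j) = 1\<^sub>m (2^n) $$ (i,j)"
      using ij by (auto simp: adj_S_index sdiag_def)
  qed auto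
  show "gate_mat n (S q) * adj (gate_mat n (S q)) = 1\<^sub>m (2^n)"
  proof (rule eq_matI2[where N="2^n"])
    fix i j :: nat assume ij: "i < 2^n" "j < 2^n"
    have "(gate_mat n (S q) * adj (gate_mat n (S q))) $$ (i,j) = gate_mat n (S q) $$ (i, j) * cnj (sdiag q j)"
      using ij by (intro mult_mono_right) (auto simp: adj_S_index)
    then show "(gate_mat n (S q) * adj (gate_mat n (S q))) $$ (i,j) = 1\<^sub>m (2^n) $$ (i,j)"
      using ij by (auto simp: S_index sdiag_def)
  qed auto
qed

lemma gate_unitary:
  assumes "wf_gate n g"
  shows "adj (gate_mat n g) * gate_mat n g = 1\<^sub>m (2^n) \<and> gate_mat n g * adj (gate_mat n g) = 1\<^sub>m (2^n)"
  using assms by (cases g) (auto simp: wf_gate_def adj_H HH adj_CX CXCX SS_unit)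

lemma circuit_unitary:
  assumes "wf_circuit n c"
  shows "adj (circuit_mat n c) * circuit_mat n c = 1\<^sub>m (2^n) \<and> circuit_mat n c * adj (circuit_mat n c) = 1\<^sub>m (2^n)"
  using assms
proof (induction c)
  case Nil
  have "adj (1\<^sub>m (2^n)) = 1\<^sub>m (2^n)" by (rule eq_matI) (auto simp: adj_def)
  then show ?case by simp
next
  case (Cons g gs)
  have wg: "wf_gate n g" and wgs: "wf_circuit n gs" using Cons.prems by (auto simp: wf_circuit_def)
  note G = gate_unitary[OF wg] and U = Cons.IH[OF wgs]
  define A where "A = circuit_mat n gs"
  define B where "B = gate_mat n g"
  have AC: "A \<in> carrier_mat (2^n) (2^n)" "B \<in> carrier_mat (2^n) (2^n)" by (auto simp: A_def B_def)
  have AA: "adj A \<in> carrier_mat (2^n) (2^n)" "adj B \<in> carrier_mat (2^n) (2^n)" using AC by auto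
  have 1: "adj (A * B) * (A * B) = 1\<^sub>m (2^n)"
  proof -
    have "adj (A * B) * (A * B) = adj B * ((adj A * A) * B)"
      using AC AA by (simp only: adj_mult[where N="2^n"] assoc2[where N="2^n"] carr0)
    also have "\<dots> = 1\<^sub>m (2^n)" using U G AC by (simp add: A_def B_def)
    finally show ?thesis .
  qed
  have 2: "(A * B) * adj (A * B) = 1\<^sub>m (2^n)"
  proof -
    have "(A * B) * adj (A * B) = A * ((B * adj B) * adj A)"
      using AC AA by (simp only: adj_mult[where N="2^n"] assoc2[where N="2^n"] carr0)
    also have "\<dots> = 1\<^sub>m (2^n)" using U G AC by (simp add: A_def B_def)
    finally show ?thesis .
  qed
  show ?case using 1 2 by (simp add: A_def B_def)
qed

fun ob :: "nat \<Rightarrow> (nat \<Rightarrow> bool) \<Rightarrow> nat" where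
  "ob 0 P = 0"
| "ob (Suc k) P = ob k P XOR (if P k then 2^k else 0)"

lemma bt_ob: "bt (ob k P) q = (q < k \<and> P q)"
  by (induction k) (auto simp: bit_xor_iff bit_exp_iff less_Suc_eq)

lemma ob_lt: "ob k P < 2^k"
  by (rule lt2I) (simp add: bt_ob)

lemma ob_self: "a < 2^n \<Longrightarrow> ob n (bt a) = a"
  by (rule bit_eq_lt[OF ob_lt]) (auto simp: bt_ob)

lemma pm_right_simp: "A \<in> carrier_mat (2^n) (2^n) \<Longrightarrow> i < 2^n \<Longrightarrow> j < 2^n \<Longrightarrow> a < 2^n \<Longrightarrow>
  (A * pm n a b) $$ (i,j) = A $$ (i, j XOR a) * sg n b j"
  by (rule mult_pm_right)

lemma pm_left_simp: "B \<in> carrier_mat (2^n) (2^n) \<Longrightarrow> i < 2^n \<Longrightarrow> j < 2^n \<Longrightarrow> a < 2^n \<Longrightarrow>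
  (pm n a b * B) $$ (i,j) = sg n b (i XOR a) * B $$ (i XOR a, j)"
  by (rule mult_pm_left)

lemma commutant:
  assumes W: "W \<in> carrier_mat (2^n) (2^n)"
    and hZ: "\<And>q. q < n \<Longrightarrow> \<exists>m. W * pm n 0 (2^q) = m \<cdot>\<^sub>m (pm n 0 (2^q) * W)"
    and hX: "\<And>q. q < n \<Longrightarrow> \<exists>m. W * pm n (2^q) 0 = m \<cdot>\<^sub>m (pm n (2^q) 0 * W)"
  shows "\<exists>d a0 b0. a0 < 2^n \<and> b0 < 2^n \<and> W = d \<cdot>\<^sub>m pm n a0 b0"
proof -
  have "\<forall>q. \<exists>m. q < n \<longrightarrow> W * pm n 0 (2^q) = m \<cdot>\<^sub>m (pm n 0 (2^q) * W)" using hZ by metis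
  then obtain \<nu> where nu: "\<And>q. q < n \<Longrightarrow> W * pm n 0 (2^q) = \<nu> q \<cdot>\<^sub>m (pm n 0 (2^q) * W)"
    by metis
  have "\<forall>q. \<exists>m. q < n \<longrightarrow> W * pm n (2^q) 0 = m \<cdot>\<^sub>m (pm n (2^q) 0 * W)" using hX by metis
  then obtain \<mu> where mu: "\<And>q. q < n \<Longrightarrow> W * pm n (2^q) 0 = \<mu> q \<cdot>\<^sub>m (pm n (2^q) 0 * W)"
    by metis
  have Zent: "W$$(i,j) * sg n (2^q) j = \<nu> q * (sg n (2^q) i * W$$(i,j))"
    if a: "q<n" "i<2^n" "j<2^n" for q i j
  proof -
    have "(W * pm n 0 (2^q))$$(i,j) = (\<nu> q \<cdot>\<^sub>m (pm n 0 (2^q) * W))$$(i,j)" using nu[OF a(1)] by simp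
    then show ?thesis using a W by (simp add: pm_right_simp pm_left_simp del: index_mult_mat(1))
  qed
  have Xent: "W$$(i, j XOR 2^q) = \<mu> q * W$$(i XOR 2^q, j)"
    if a: "q<n" "i<2^n" "j<2^n" for q i j
  proof -
    have "(W * pm n (2^q) 0)$$(i,j) = (\<mu> q \<cdot>\<^sub>m (pm n (2^q) 0 * W))$$(i,j)" using mu[OF a(1)] by simp
    then show ?thesis using a W by (simp add: pm_right_simp pm_left_simp del: index_mult_mat(1))
  qed
  show ?thesis
  proof (cases "\<forall>i<2^n. \<forall>j<2^n. W$$(i,j) = 0")
    case True
    have "W = 0 \<cdot>\<^sub>m pm n 0 0"
      by (rule eq_matI2[where N="2^n"]) (use W True in auto)
    then show ?thesis by (intro exI[of _ 0] exI[of _ "0::nat"]) auto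
  next
    case False
    then obtain i0 j0 where ij0: "i0 < 2^n" "j0 < 2^n" "W$$(i0,j0) \<noteq> 0" by blast
    define a0 where "a0 = i0 XOR j0"
    have a0lt: "a0 < 2^n" using ij0 by (simp add: a0_def)
    have supp: "i = j XOR a0" if a: "i < 2^n" "j < 2^n" "W$$(i,j) \<noteq> 0" for i j
    proof (rule bit_eq_lt)
      show "i < 2^n" "j XOR a0 < 2^n" using a a0lt by auto
      fix q assume q: "q < n"
      have e1: "sg n (2^q) j = \<nu> q * sg n (2^q) i" using Zent[OF q a(1,2)] a(3) by simp
      have e2: "sg n (2^q) j0 = \<nu> q * sg n (2^q) i0" using Zent[OF q ij0(1,2)] ij0(3) by simp
      show "bt i q = bt (j XOR a0) q"
        using e1 e2 q by (auto simp: sg_exp_left a0_def bit_xor_iff split: if_splits)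
    qed
    define D where "D j = W$$(j XOR a0, j)" for j
    have Dstep: "D (j XOR 2^q) = \<mu> q * D j" if a: "j < 2^n" "q < n" for j q
    proof -
      have "W$$((j XOR 2^q) XOR a0, (j XOR 2^q)) = \<mu> q * W$$(((j XOR 2^q) XOR a0) XOR 2^q, j)"
        using Xent[OF a(2), of "(j XOR 2^q) XOR a0" j] a a0lt by simp
      moreover have "((j XOR 2^q) XOR a0) XOR 2^q = j XOR a0"
        by (metis xor.assoc xor.commute xorx(1))
      ultimately show ?thesis by (simp add: D_def)
    qed
    have Dj0: "D j0 \<noteq> 0" using ij0 by (simp add: D_def a0_def xor.assoc)
    have musq: "\<mu> q = 1 \<or> \<mu> q = -1" if q: "q < n" for q
    proof -
      have j1: "j0 XOR 2^q < 2^n" using ij0 q by simp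
      have "D j0 = D ((j0 XOR 2^q) XOR 2^q)" by simp
      also have "\<dots> = \<mu> q * (\<mu> q * D j0)" using Dstep[OF j1 q] Dstep[OF ij0(2) q] by simp
      finally have "(\<mu> q * \<mu> q - 1) * D j0 = 0" by (simp add: algebra_simps)
      then have "\<mu> q * \<mu> q = 1" using Dj0 by simp
      then show ?thesis by (metis power2_eq_square power2_eq_1_iff)
    qed
    define b0 where "b0 = ob n (\<lambda>q. \<mu> q = -1)"
    have b0lt: "b0 < 2^n" by (simp add: b0_def ob_lt)
    have Dform: "\<forall>j < 2^k. D j = D 0 * sg n b0 j" if "k \<le> n" for k
      using that
    proof (induction k)
      case 0 then show ?case by simp
    next
      case (Suc k)
      have IH: "\<forall>j<2^k. D j = D 0 * sg n b0 j" using Suc.IH Suc.prems by (meson Suc_leD)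
      show ?case
      proof (intro allI impI)
        fix j :: nat assume j: "j < 2^Suc k"
        show "D j = D 0 * sg n b0 j"
        proof (cases "bt j k")
          case False
          have jb: "\<And>q. bt j q \<Longrightarrow> q < Suc k" using j by (metis lt2D)
          have "j < 2^k"
          proof (rule lt2I)
            fix q assume "bt j q"
            then have "q < Suc k" "q \<noteq> k" using jb False by auto
            then show "q < k" by simp
          qed
          then show ?thesis using IH by blast
        next
          case True
          define j' where "j' = j XOR 2^k"
          have jb: "\<And>q. bt j q \<Longrightarrow> q < Suc k" using j by (metis lt2D)
          have j'lt: "j' < 2^k"
          proof (rule lt2I)
            fix q assume "bt j' q"
            then have "bt j q" "q \<noteq> k" using True by (auto simp: j'_def bit_xor_iff bit_exp_iff)
            then have "q < Suc k" "q \<noteq> k" using jb by auto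
            then show "q < k" by simp
          qed
          have jj: "j = j' XOR 2^k" by (simp add: j'_def)
          have kn: "k < n" using Suc.prems by simp
          have j'n: "j' < 2^n" using j'lt kn by (meson less_trans power_strict_increasing_iff one_less_numeral_iff semiring_norm(76))
          have "D j = \<mu> k * D j'" using Dstep[OF j'n kn] jj by simp
          also have "\<dots> = \<mu> k * (D 0 * sg n b0 j')" using IH j'lt by metis
          also have "\<dots> = D 0 * sg n b0 j"
            using musq[OF kn] kn by (auto simp: jj sg_xor_right sg_exp_right b0_def bt_ob)
          finally show ?thesis .
        qed
      qed
    qed
    have "W = D 0 \<cdot>\<^sub>m pm n a0 b0"
    proof (rule eq_matI2[where N="2^n"])
      fix i j :: nat assume ij: "i < 2^n" "j < 2^n"
      show "W $$ (i,j) = (D 0 \<cdot>\<^sub>m pm n a0 b0) $$ (i,j)"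
      proof (cases "i = j XOR a0")
        case True
        then show ?thesis using ij Dform[of n] by (simp add: pm_index D_def)
      next
        case False
        then have "W$$(i,j) = 0" using supp ij by blast
        then show ?thesis using ij False by (simp add: pm_index)
      qed
    qed (use W in auto)
    then show ?thesis using a0lt b0lt by blast
  qed
qed

lemma adj_pm_index: "i < 2^n \<Longrightarrow> k < 2^n \<Longrightarrow> adj (pm n a b) $$ (i,k) = (if k = i XOR a then sg n b i else 0)"
  by (auto simp: adj_index pm_index sg_def xor_eq_iff)

lemma pm_unitary: "a < 2^n \<Longrightarrow> adj (pm n a b) * pm n a b = 1\<^sub>m (2^n)"
proof (rule eq_matI2[where N="2^n"])
  fix i j :: nat assume ij: "i < 2^n" "j < 2^n" and a: "a < 2^n"
  have "(adj (pm n a b) * pm n a b) $$ (i,j) = sg n b i * pm n a b $$ (i XOR a, j)"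
    using ij a by (intro mult_mono_left) (auto simp: adj_pm_index)
  then show "(adj (pm n a b) * pm n a b) $$ (i,j) = 1\<^sub>m (2^n) $$ (i,j)"
    using ij a by (auto simp: pm_index xor_eq_iff)
qed auto

lemma swap_rel:
  assumes C: "U \<in> carrier_mat N N" "V \<in> carrier_mat N N" "X \<in> carrier_mat N N" "P \<in> carrier_mat N N"
    and VV: "adj V * V = 1\<^sub>m N" "V * adj V = 1\<^sub>m N"
    and hU: "U * X = l \<cdot>\<^sub>m (P * U)" and hV: "V * X = l' \<cdot>\<^sub>m (P * V)" and l': "l' \<noteq> 0"
  shows "(adj V * U) * X = (l / l') \<cdot>\<^sub>m (X * (adj V * U))"
proof -
  have AV: "adj V \<in> carrier_mat N N" using C by auto
  note cr = C AV mcarr smult_carrier_mat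
  have XA: "X * adj V = l' \<cdot>\<^sub>m (adj V * P)"
  proof -
    have "X * adj V = (adj V * V) * X * adj V" using C VV by simp
    also have "\<dots> = adj V * (V * X) * adj V" by (simp only: assoc2[where N=N] cr)
    also have "\<dots> = adj V * (l' \<cdot>\<^sub>m (P * V)) * adj V" by (simp only: hV)
    also have "\<dots> = l' \<cdot>\<^sub>m (adj V * P * (V * adj V))"
      by (simp only: msd[where N=N] msa[where N=N] assoc2[where N=N] cr)
    also have "\<dots> = l' \<cdot>\<^sub>m (adj V * P)" using VV C by simp
    finally show ?thesis .
  qed
  have 1: "(adj V * U) * X = l \<cdot>\<^sub>m (adj V * P * U)"
  proof -
    have "(adj V * U) * X = adj V * (U * X)" by (simp only: assoc2[where N=N] cr)
    also have "\<dots> = l \<cdot>\<^sub>m (adj V * P * U)" by (simp only: hU msd[where N=N] assoc2[where N=N] cr)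
    finally show ?thesis .
  qed
  have 2: "X * (adj V * U) = l' \<cdot>\<^sub>m (adj V * P * U)"
  proof -
    have "X * (adj V * U) = (X * adj V) * U" by (simp only: assoc2[where N=N] cr)
    also have "\<dots> = l' \<cdot>\<^sub>m (adj V * P * U)" by (simp only: XA msa[where N=N] assoc2[where N=N] cr)
    finally show ?thesis .
  qed
  show ?thesis unfolding 1 2 using l' by (simp add: smult_smult_mat)
qed

lemma norm_from_unitary:
  assumes "adj U * U = 1\<^sub>m N" "adj M * M = 1\<^sub>m N" "U = z \<cdot>\<^sub>m M" "M \<in> carrier_mat N N" "0 < N"
  shows "cmod z = 1"
proof -
  have "adj U * U = (cnj z * z) \<cdot>\<^sub>m (adj M * M)"
    unfolding assms(3) adj_smult
    by (simp only: msa[where N=N] msd[where N=N] smult_smult_mat adj_carrier assms(4) smult_carrier_mat) (simp add: mult.commute)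
  then have e: "adj U * U = (cnj z * z) \<cdot>\<^sub>m 1\<^sub>m N" using assms(2) by simp
  then have "(cnj z * z) \<cdot>\<^sub>m 1\<^sub>m N = 1\<^sub>m N" using assms(1) by metis
  then have "((cnj z * z) \<cdot>\<^sub>m 1\<^sub>m N) $$ (0,0) = 1\<^sub>m N $$ (0,0)" by simp
  then have "cnj z * z = 1" using assms by simp
  then have "complex_of_real ((cmod z)^2) = 1" using complex_norm_square[of z] by (metis mult.commute)
  then have "(cmod z)^2 = 1" by (metis of_real_eq_1_iff)
  then show ?thesis using norm_ge_zero[of z] by (auto simp: power2_eq_1_iff)
qed

lemma tableau_equiv:
  assumes wc: "wf_circuit n c" and wd: "wf_circuit n d"
    and tX: "\<And>q. q < n \<Longrightarrow> fc c (2^q, 0) = fc d (2^q, 0)"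
    and tZ: "\<And>q. q < n \<Longrightarrow> fc c (0, 2^q) = fc d (0, 2^q)"
  shows "\<exists>z a0 b0. cmod z = 1 \<and> a0 < 2^n \<and> b0 < 2^n \<and> circuit_mat n c = z \<cdot>\<^sub>m (circuit_mat n d * pm n a0 b0)"
proof -
  define U where "U = circuit_mat n c"
  define V where "V = circuit_mat n d"
  define W where "W = adj V * U"
  have C: "U \<in> carrier_mat (2^n) (2^n)" "V \<in> carrier_mat (2^n) (2^n)" "W \<in> carrier_mat (2^n) (2^n)"
    by (auto simp: U_def V_def W_def)
  note UU = circuit_unitary[OF wc, folded U_def] and VV = circuit_unitary[OF wd, folded V_def]
  have gen: "\<exists>m. W * pm n a b = m \<cdot>\<^sub>m (pm n a b * W)"
    if ab: "a < 2^n" "b < 2^n" "fc c (a,b) = fc d (a,b)" for a b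
  proof -
    obtain l where l: "cmod l = 1" "U * pm n a b = l \<cdot>\<^sub>m (pm n (fst (fc c (a,b))) (snd (fc c (a,b))) * U)"
      using circ_conj[OF wc ab(1,2)] by (auto simp: U_def)
    obtain l' where l': "cmod l' = 1" "V * pm n a b = l' \<cdot>\<^sub>m (pm n (fst (fc c (a,b))) (snd (fc c (a,b))) * V)"
      using circ_conj[OF wd ab(1,2)] ab(3) by (auto simp: V_def)
    have "l' \<noteq> 0" using l'(1) by auto
    show ?thesis unfolding W_def
      by (rule exI, rule swap_rel[where N="2^n", OF C(1,2) pm_carrier pm_carrier _ _ l(2) l'(2) \<open>l' \<noteq> 0\<close>])
         (use VV in auto)
  qed
  obtain dd a0 b0 where dab: "a0 < 2^n" "b0 < 2^n" "W = dd \<cdot>\<^sub>m pm n a0 b0"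
    using commutant[OF C(3)] gen tX tZ by (metis exp_lt zero_less_numeral zero_less_power)
  have "U = V * W"
  proof -
    have "U = (V * adj V) * U" using VV C by simp
    also have "\<dots> = V * W" unfolding W_def by (rule assoc2) (use C in auto)
    finally show ?thesis .
  qed
  then have UVW: "U = dd \<cdot>\<^sub>m (V * pm n a0 b0)" using dab C by (simp add: msd[where N="2^n"])
  have MM: "adj (V * pm n a0 b0) * (V * pm n a0 b0) = 1\<^sub>m (2^n)"
  proof -
    have "adj (V * pm n a0 b0) * (V * pm n a0 b0) = adj (pm n a0 b0) * ((adj V * V) * pm n a0 b0)"
      using C by (simp only: adj_mult[where N="2^n"] assoc2[where N="2^n"] pm_carrier mcarr adj_carrier)
    also have "\<dots> = 1\<^sub>m (2^n)" using VV pm_unitary[OF dab(1)] by simp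
    finally show ?thesis .
  qed
  have "cmod dd = 1"
    by (rule norm_from_unitary[OF _ MM UVW]) (use UU C in auto)
  then show ?thesis using dab UVW by (auto simp: U_def V_def)
qed

definition zc :: "nat \<Rightarrow> gate list" where "zc q = [S q, S q]"
definition xc :: "nat \<Rightarrow> gate list" where "xc q = [H q, S q, S q, H q]"
definition blk :: "nat \<Rightarrow> nat \<Rightarrow> nat \<Rightarrow> gate list" where
  "blk a b q = (if bt b q then zc q else []) @ (if bt a q then xc q else [])"
definition pc :: "nat \<Rightarrow> nat \<Rightarrow> nat \<Rightarrow> gate list" where
  "pc a b k = concat (map (blk a b) [0..<k])"

lemma one_smult: "1 \<cdot>\<^sub>m (A::complex mat) = A"
  by (rule eq_matI) auto

lemma pm_00: "pm n 0 0 = 1\<^sub>m (2^n)"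
  by (rule eq_matI) (auto simp: pm_def)

lemma pm_mult: "a < 2^n \<Longrightarrow> a' < 2^n \<Longrightarrow> pm n a b * pm n a' b' = sg n b a' \<cdot>\<^sub>m pm n (a XOR a') (b XOR b')"
proof (rule eq_matI2[where N="2^n"])
  fix i j :: nat assume ij: "i < 2^n" "j < 2^n" and a: "a < 2^n" "a' < 2^n"
  have "(pm n a b * pm n a' b') $$ (i,j) = sg n b (i XOR a) * pm n a' b' $$ (i XOR a, j)"
    using ij a by (intro mult_pm_left) auto
  also have "\<dots> = (sg n b a' \<cdot>\<^sub>m pm n (a XOR a') (b XOR b')) $$ (i,j)"
  proof (cases "i = j XOR (a XOR a')")
    case True
    then have "i XOR a = j XOR a'" by (metis xor.assoc xor.commute xorx(1))
    then show ?thesis using ij a True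
      by (simp add: pm_index sg_xor_left sg_xor_right xor.assoc xor.left_commute[of a a'])
  next
    case False
    then have "i XOR a \<noteq> j XOR a'" by (metis xor.assoc xor.commute xorx(1))
    then show ?thesis using ij a False by (simp add: pm_index)
  qed
  finally show "(pm n a b * pm n a' b') $$ (i,j) = (sg n b a' \<cdot>\<^sub>m pm n (a XOR a') (b XOR b')) $$ (i,j)" .
qed auto

lemma SS_mat: "q < n \<Longrightarrow> circuit_mat n (zc q) = pm n 0 (2^q)"
proof -
  assume q: "q < n"
  have "circuit_mat n (zc q) = gate_mat n (S q) * gate_mat n (S q)" by (simp add: zc_def)
  also have "\<dots> = pm n 0 (2^q)"
  proof (rule eq_matI2[where N="2^n"])
    fix i j :: nat assume ij: "i < 2^n" "j < 2^n"
    have "(gate_mat n (S q) * gate_mat n (S q)) $$ (i,j) = gate_mat n (S q) $$ (i, j) * sdiag q j"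
      using ij by (intro mult_mono_right) (auto simp: S_index sdiag_def)
    then show "(gate_mat n (S q) * gate_mat n (S q)) $$ (i,j) = pm n 0 (2^q) $$ (i,j)"
      using ij q by (auto simp: S_index sdiag_def pm_index sg_exp_left)
  qed auto
  finally show ?thesis .
qed

lemma HZH_mat: "q < n \<Longrightarrow> circuit_mat n (xc q) = pm n (2^q) 0"
proof -
  assume q: "q < n"
  note cr = gate_carrier pm_carrier mcarr smult_carrier_mat
  have "circuit_mat n (xc q) = gate_mat n (H q) * (gate_mat n (S q) * gate_mat n (S q)) * gate_mat n (H q)"
    by (simp add: xc_def assoc2[where N="2^n"])
  also have "\<dots> = gate_mat n (H q) * pm n 0 (2^q) * gate_mat n (H q)"
    using SS_mat[OF q] by (simp add: zc_def)
  also have "\<dots> = (1 \<cdot>\<^sub>m (pm n (2^q) 0 * gate_mat n (H q))) * gate_mat n (H q)"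
    using conj_H[OF q, of 0 "2^q"] q by (simp add: bit_exp_iff)
  also have "\<dots> = pm n (2^q) 0 * (gate_mat n (H q) * gate_mat n (H q))"
    by (simp only: msa[where N="2^n"] assoc2[where N="2^n"] cr one_smult)
  also have "\<dots> = pm n (2^q) 0" using HH[OF q] by simp
  finally show ?thesis .
qed

lemma blk_mat: "q < n \<Longrightarrow> circuit_mat n (blk a b q) = pm n (if bt a q then 2^q else 0) (if bt b q then 2^q else 0)"
proof -
  assume q: "q < n"
  have "circuit_mat n (blk a b q) = pm n (if bt a q then 2^q else 0) 0 * pm n 0 (if bt b q then 2^q else 0)"
    using q by (simp add: blk_def circuit_mat_append SS_mat HZH_mat pm_00)
  also have "\<dots> = pm n (if bt a q then 2^q else 0) (if bt b q then 2^q else 0)"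
    using q by (subst pm_mult) auto
  finally show ?thesis .
qed

lemma pc_mat: "k \<le> n \<Longrightarrow> \<exists>\<kappa>. cmod \<kappa> = 1 \<and> circuit_mat n (pc a b k) = \<kappa> \<cdot>\<^sub>m pm n (ob k (bt a)) (ob k (bt b))"
proof (induction k)
  case 0 then show ?case by (intro exI[of _ 1]) (auto simp: pc_def pm_00)
next
  case (Suc k)
  then obtain \<kappa> where k: "cmod \<kappa> = 1" "circuit_mat n (pc a b k) = \<kappa> \<cdot>\<^sub>m pm n (ob k (bt a)) (ob k (bt b))" by auto
  have kn: "k < n" using Suc by simp
  have ob_lt': "ob k (bt a) < 2^n" using ob_lt[of k] kn
    by (meson less_trans power_strict_increasing_iff one_less_numeral_iff semiring_norm(76))
  define ea where "ea = (if bt a k then 2^k else (0::nat))"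
  define eb where "eb = (if bt b k then 2^k else (0::nat))"
  have ealt: "ea < 2^n" using kn by (simp add: ea_def)
  have "circuit_mat n (pc a b (Suc k)) = circuit_mat n (blk a b k) * circuit_mat n (pc a b k)"
    by (simp add: pc_def circuit_mat_append)
  also have "\<dots> = pm n ea eb * (\<kappa> \<cdot>\<^sub>m pm n (ob k (bt a)) (ob k (bt b)))"
    using blk_mat[OF kn] k by (simp add: ea_def eb_def)
  also have "\<dots> = (\<kappa> * sg n eb (ob k (bt a))) \<cdot>\<^sub>m pm n (ea XOR ob k (bt a)) (eb XOR ob k (bt b))"
    using ealt ob_lt' by (simp add: msd[where N="2^n"] pm_mult smult_smult_mat)
  also have "\<dots> = (\<kappa> * sg n eb (ob k (bt a))) \<cdot>\<^sub>m pm n (ob (Suc k) (bt a)) (ob (Suc k) (bt b))"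
    by (simp add: ea_def eb_def xor.commute)
  finally show ?case using k by (intro exI[of _ "\<kappa> * sg n eb (ob k (bt a))"]) (auto simp: norm_mult sg_def)
qed

lemma pc_wf: "k \<le> n \<Longrightarrow> wf_circuit n (pc a b k)"
  by (auto simp: pc_def wf_circuit_def blk_def zc_def xc_def wf_gate_def)

lemma pc_len: "length (pc a b k) \<le> 6 * k"
proof (induction k)
  case 0 then show ?case by (simp add: pc_def)
next
  case (Suc k)
  have "length (blk a b k) \<le> 6" by (simp add: blk_def zc_def xc_def)
  then show ?case using Suc by (simp add: pc_def)
qed

lemma equiv_of_tableau:
  assumes wc: "wf_circuit n c" and wd: "wf_circuit n d"
    and tX: "\<And>q. q < n \<Longrightarrow> fc c (2^q, 0) = fc d (2^q, 0)"
    and tZ: "\<And>q. q < n \<Longrightarrow> fc c (0, 2^q) = fc d (0, 2^q)"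
  shows "\<exists>p. wf_circuit n p \<and> length p \<le> 6 * n \<and> equiv_circuits n c (p @ d)"
proof -
  obtain z a0 b0 where z: "cmod z = 1" "a0 < 2^n" "b0 < 2^n" "circuit_mat n c = z \<cdot>\<^sub>m (circuit_mat n d * pm n a0 b0)"
    using tableau_equiv[OF assms] by blast
  obtain \<kappa> where k: "cmod \<kappa> = 1" "circuit_mat n (pc a0 b0 n) = \<kappa> \<cdot>\<^sub>m pm n a0 b0"
    using pc_mat[of n n a0 b0] z(2,3) by (auto simp: ob_self)
  have "circuit_mat n (pc a0 b0 n @ d) = \<kappa> \<cdot>\<^sub>m (circuit_mat n d * pm n a0 b0)"
    using k by (simp add: circuit_mat_append msd[where N="2^n"])
  then have "circuit_mat n c = (z / \<kappa>) \<cdot>\<^sub>m circuit_mat n (pc a0 b0 n @ d)"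
    using z k by (auto simp: smult_smult_mat)
  moreover have "cmod (z / \<kappa>) = 1" using z k by (simp add: norm_divide)
  ultimately have "equiv_circuits n c (pc a0 b0 n @ d)" by (auto simp: equiv_circuits_def)
  moreover have "wf_circuit n (pc a0 b0 n @ d)" using pc_wf[of n n] wd by (auto simp: wf_circuit_def)
  ultimately show ?thesis using pc_len[of a0 b0 n] by (intro exI[of _ "pc a0 b0 n"]) (auto simp: wf_circuit_def pc_wf[of n n, simplified wf_circuit_def])
qed

definition vxor :: "nat \<times> nat \<Rightarrow> nat \<times> nat \<Rightarrow> nat \<times> nat" where
  "vxor v w = (fst v XOR fst w, snd v XOR snd w)"

definition vlt :: "nat \<Rightarrow> nat \<times> nat \<Rightarrow> bool" where
  "vlt n v = (fst v < 2^n \<and> snd v < 2^n)"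

definition omv :: "nat \<times> nat \<Rightarrow> nat \<times> nat \<Rightarrow> nat" where
  "omv v w = (fst v AND snd w) XOR (snd v AND fst w)"

definition om :: "nat \<Rightarrow> nat \<times> nat \<Rightarrow> nat \<times> nat \<Rightarrow> bool" where
  "om n v w = par n (omv v w)"

definition Xv :: "nat \<Rightarrow> nat \<times> nat" where "Xv q = (2^q, 0)"
definition Zv :: "nat \<Rightarrow> nat \<times> nat" where "Zv q = (0, 2^q)"

lemma fg_bits:
  "bt (fst (fg (H q) v)) k = (if k = q then bt (snd v) q else bt (fst v) k)"
  "bt (snd (fg (H q) v)) k = (if k = q then bt (fst v) q else bt (snd v) k)"
  "fst (fg (S q) v) = fst v"
  "bt (snd (fg (S q) v)) k = (if k = q then bt (snd v) q \<noteq> bt (fst v) q else bt (snd v) k)"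
  "c \<noteq> t \<Longrightarrow> bt (fst (fg (CNOT c t) v)) k = (if k = t then bt (fst v) t \<noteq> bt (fst v) c else bt (fst v) k)"
  "c \<noteq> t \<Longrightarrow> bt (snd (fg (CNOT c t) v)) k = (if k = c then bt (snd v) c \<noteq> bt (snd v) t else bt (snd v) k)"
  by (cases v; auto simp: bit_xor_iff bit_exp_iff bt_cx)+

lemma pair_bit_eqI: "(\<And>k. bt (fst v) k = bt (fst w) k) \<Longrightarrow> (\<And>k. bt (snd v) k = bt (snd w) k) \<Longrightarrow> v = w"
  by (metis bit_eqI prod.collapse)

lemma fst_vxor[simp]: "fst (vxor v w) = fst v XOR fst w" and snd_vxor[simp]: "snd (vxor v w) = snd v XOR snd w"
  by (auto simp: vxor_def)

lemma fg_lin: "wf_gate n g \<Longrightarrow> fg g (vxor v w) = vxor (fg g v) (fg g w)"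
  by (cases g; rule pair_bit_eqI; auto simp: fg_bits bit_xor_iff wf_gate_def)

lemma fc_lin: "wf_circuit n c \<Longrightarrow> fc c (vxor v w) = vxor (fc c v) (fc c w)"
proof (induction c arbitrary: v w)
  case Nil then show ?case by simp
next
  case (Cons g c)
  have "wf_gate n g" "wf_circuit n c" using Cons.prems by (auto simp: wf_circuit_def)
  then show ?case using Cons.IH by (simp add: fg_lin)
qed

lemma vxor_00: "vxor (0,0) (0,0) = (0,0)" by (simp add: vxor_def)

lemma fc_0: "wf_circuit n c \<Longrightarrow> fc c (0,0) = (0,0)"
proof -
  assume w: "wf_circuit n c"
  have "fc c (0,0) = vxor (fc c (0,0)) (fc c (0,0))" using fc_lin[OF w, of "(0,0)" "(0,0)"] by (simp add: vxor_def)
  then show ?thesis by (simp add: vxor_def prod_eq_iff)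
qed

lemma fg_invol: "wf_gate n g \<Longrightarrow> fg g (fg g v) = v"
  by (cases g; rule pair_bit_eqI; auto simp: fg_bits wf_gate_def)

lemma fc_rev: "wf_circuit n c \<Longrightarrow> fc (rev c) (fc c v) = v"
  by (induction c arbitrary: v) (auto simp: wf_circuit_def fc_append fg_invol)

lemma fc_rev2: "wf_circuit n c \<Longrightarrow> fc c (fc (rev c) v) = v"
  using fc_rev[of n "rev c"] by (simp add: wf_circuit_def)

lemma wf_rev[simp]: "wf_circuit n (rev c) = wf_circuit n c"
  by (simp add: wf_circuit_def)

lemma wf_append[simp]: "wf_circuit n (x @ y) = (wf_circuit n x \<and> wf_circuit n y)"
  by (auto simp: wf_circuit_def)

lemma vlt_fc: "wf_circuit n c \<Longrightarrow> vlt n v \<Longrightarrow> vlt n (fc c v)"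
  using fc_lt[of n c "fst v" "snd v"] by (auto simp: vlt_def)

lemma par_exp_xor: "c < n \<Longrightarrow> t < n \<Longrightarrow> c \<noteq> t \<Longrightarrow> par n (2^c XOR 2^t) = False"
  by (simp add: par_xor par_exp)

lemma om_fg: "wf_gate n g \<Longrightarrow> om n (fg g v) (fg g w) = om n v w"
proof (cases g)
  case (H q)
  have "omv (fg g v) (fg g w) = omv v w"
    unfolding H by (rule bit_eqI) (auto simp: omv_def bit_and_iff bit_xor_iff fg_bits)
  then show ?thesis by (simp add: om_def)
next
  case (S q)
  have "omv (fg g v) (fg g w) = omv v w"
    unfolding S by (rule bit_eqI) (auto simp: omv_def bit_and_iff bit_xor_iff fg_bits)
  then show ?thesis by (simp add: om_def)
next
  case (CNOT c t)
  assume w: "wf_gate n g"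
  then have ct: "c < n" "t < n" "c \<noteq> t" using CNOT by (auto simp: wf_gate_def)
  have "omv (fg g v) (fg g w) = omv v w XOR (if (bt (fst v) c \<and> bt (snd w) t) \<noteq> (bt (snd v) t \<and> bt (fst w) c) then 2^c XOR 2^t else 0)"
    unfolding CNOT by (rule bit_eqI) (use ct in \<open>auto simp: omv_def bit_and_iff bit_xor_iff fg_bits bit_exp_iff\<close>)
  then show ?thesis using ct by (simp add: om_def par_xor par_exp)
qed

lemma om_fc: "wf_circuit n c \<Longrightarrow> om n (fc c v) (fc c w) = om n v w"
  by (induction c arbitrary: v w) (auto simp: wf_circuit_def om_fg)

lemma om_X: "q < n \<Longrightarrow> om n v (Xv q) = bt (snd v) q"
  by (simp add: om_def omv_def Xv_def par_and_exp)

lemma om_Z: "q < n \<Longrightarrow> om n v (Zv q) = bt (fst v) q"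
  by (simp add: om_def omv_def Zv_def par_xor par_and_exp)

lemma om_XZ: "q < n \<Longrightarrow> om n (Xv q) (Zv q)"
  by (simp add: om_def omv_def Xv_def Zv_def par_and_exp bit_exp_iff par_exp)

lemma om_sym: "om n v w = om n w v"
  by (simp add: om_def omv_def and.commute xor.commute)

lemma om_XX: "q < n \<Longrightarrow> \<not> om n (Xv p) (Xv q)"
  by (subst om_X) (auto simp: Xv_def)

lemma om_ZZ: "q < n \<Longrightarrow> \<not> om n (Zv p) (Zv q)"
  by (subst om_Z) (auto simp: Zv_def)

lemma om_ZX: "q < n \<Longrightarrow> p \<noteq> q \<Longrightarrow> \<not> om n (Zv p) (Xv q)"
  by (subst om_X) (auto simp: Zv_def bit_exp_iff)

lemma om_XZ': "q < n \<Longrightarrow> p \<noteq> q \<Longrightarrow> \<not> om n (Xv p) (Zv q)"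
  by (subst om_Z) (auto simp: Xv_def bit_exp_iff)

lemma vxor_assoc: "vxor (vxor u v) w = vxor u (vxor v w)"
  by (simp add: vxor_def xor.assoc)

lemma gen_fix:
  assumes lin: "\<And>v w. f (vxor v w) = vxor (f v) (f w)"
    and fx: "\<And>q. q < n \<Longrightarrow> f (Xv q) = Xv q" and fz: "\<And>q. q < n \<Longrightarrow> f (Zv q) = Zv q"
    and v: "vlt n v"
  shows "f v = v"
proof -
  have f0: "f (0,0) = (0,0)"
  proof -
    have "f (0,0) = vxor (f (0,0)) (f (0,0))" using lin[of "(0,0)" "(0,0)"] by (simp add: vxor_def)
    then show ?thesis by (simp add: vxor_def prod_eq_iff)
  qed
  have "k \<le> n \<Longrightarrow> f (ob k (bt (fst v)), ob k (bt (snd v))) = (ob k (bt (fst v)), ob k (bt (snd v)))" for k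
  proof (induction k)
    case 0 then show ?case using f0 by simp
  next
    case (Suc k)
    define ea where "ea = (if bt (fst v) k then 2^k else (0::nat))"
    define eb where "eb = (if bt (snd v) k then 2^k else (0::nat))"
    have kn: "k < n" using Suc by simp
    have fa: "f (ea, 0) = (ea, 0)" using fx[OF kn] f0 by (simp add: ea_def Xv_def)
    have fb: "f (0, eb) = (0, eb)" using fz[OF kn] f0 by (simp add: eb_def Zv_def)
    have eq: "(ob (Suc k) (bt (fst v)), ob (Suc k) (bt (snd v))) = vxor (ob k (bt (fst v)), ob k (bt (snd v))) (vxor (ea,0) (0,eb))"
      by (simp add: vxor_def ea_def eb_def)
    show ?case unfolding eq lin using Suc fa fb kn by simp
  qed
  from this[of n] show ?thesis using v by (simp add: vlt_def ob_self)
qed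

fun xl :: "nat list \<Rightarrow> nat" where
  "xl [] = 0"
| "xl (t # ts) = 2^t XOR xl ts"

lemma bt_xl: "distinct ts \<Longrightarrow> bt (xl ts) k = (k \<in> set ts)"
  by (induction ts) (auto simp: bit_xor_iff bit_exp_iff)

lemma xl_lt: "(\<forall>t\<in>set ts. t < n) \<Longrightarrow> xl ts < 2^n"
  by (induction ts) auto

lemma par_exp_and: "par n (2^q AND x) = (q < n \<and> bt x q)"
  by (simp add: and.commute[of "2^q" x] par_and_exp)

lemma spX: "bt x i \<Longrightarrow> i \<notin> set ts \<Longrightarrow> fc (map (CNOT i) ts) (x, 0) = (x XOR xl ts, 0)"
proof (induction ts arbitrary: x)
  case Nil then show ?case by simp
next
  case (Cons t ts)
  have "fg (CNOT i t) (x, 0) = (x XOR 2^t, 0)" using Cons.prems by (simp add: cx_def)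
  moreover have "bt (x XOR 2^t) i" using Cons.prems by (auto simp: bit_xor_iff bit_exp_iff)
  ultimately show ?case using Cons by (simp add: xor.assoc)
qed

lemma spX_Z: "i \<notin> set ts \<Longrightarrow> fc (map (CNOT i) ts) (0, 2^i) = (0, 2^i)"
  by (induction ts) (auto simp: cx_def bit_exp_iff)

lemma spZ: "bt y i \<Longrightarrow> i \<notin> set cs \<Longrightarrow> fc (map (\<lambda>c. CNOT c i) cs) (0, y) = (0, y XOR xl cs)"
proof (induction cs arbitrary: y)
  case Nil then show ?case by simp
next
  case (Cons c cs)
  have "fg (CNOT c i) (0, y) = (0, y XOR 2^c)" using Cons.prems by (simp add: cx_def)
  moreover have "bt (y XOR 2^c) i" using Cons.prems by (auto simp: bit_xor_iff bit_exp_iff)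
  ultimately show ?case using Cons by (simp add: xor.assoc)
qed

definition tg :: "nat \<Rightarrow> nat \<Rightarrow> nat \<Rightarrow> nat \<Rightarrow> nat list" where
  "tg n m i a = filter (\<lambda>t. bt a t \<and> t \<noteq> i) [m..<n]"

lemma tg_set: "t \<in> set (tg n m i a) \<longleftrightarrow> bt a t \<and> t \<noteq> i \<and> m \<le> t \<and> t < n"
  by (auto simp: tg_def)

lemma tg_distinct: "distinct (tg n m i a)"
  by (simp add: tg_def)

lemma xl_tg: "a < 2^n \<Longrightarrow> (\<forall>q<m. \<not> bt a q) \<Longrightarrow> xl (tg n m i a) = a XOR (if bt a i then 2^i else 0)"
  by (rule bit_eqI) (auto simp: bt_xl[OF tg_distinct] tg_set bit_xor_iff bit_exp_iff dest: lt2D)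

definition sx :: "nat \<Rightarrow> nat \<Rightarrow> nat \<Rightarrow> nat \<Rightarrow> gate list" where
  "sx n m i a = (if i = m then [] else [CNOT m i, CNOT i m]) @ map (CNOT i) (tg n m i a)"

definition sz :: "nat \<Rightarrow> nat \<Rightarrow> nat \<Rightarrow> nat \<Rightarrow> gate list" where
  "sz n m i b = (if i = m then [] else [CNOT i m, CNOT m i]) @ map (\<lambda>c. CNOT c i) (tg n m i b)"

lemma sx_fc:
  assumes "bt a i" "m \<le> i" "i < n" "a < 2^n" "\<forall>q<m. \<not> bt a q"
  shows "fc (sx n m i a) (Xv m) = (a, 0)"
proof -
  have pre: "fc (if i = m then [] else [CNOT m i, CNOT i m]) (2^m, 0) = (2^i, 0)"
  proof (cases "i = m")
    case False
    have "bt (2^m XOR 2^i) i" using False by (simp add: bit_xor_iff bit_exp_iff)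
    then show ?thesis using False by (simp add: cx_def bit_exp_iff xor.assoc)
  qed simp
  have "fc (map (CNOT i) (tg n m i a)) (2^i, 0) = (2^i XOR xl (tg n m i a), 0)"
    by (rule spX) (auto simp: bit_exp_iff tg_set)
  then show ?thesis using pre assms by (simp add: sx_def fc_append Xv_def xl_tg)
qed

lemma sx_Z: "fc (sx n m m a) (Zv m) = Zv m"
  by (simp add: sx_def Zv_def spX_Z tg_set)

lemma sz_fc:
  assumes "bt b i" "m \<le> i" "i < n" "b < 2^n" "\<forall>q<m. \<not> bt b q"
  shows "fc (sz n m i b) (Zv m) = (0, b)"
proof -
  have pre: "fc (if i = m then [] else [CNOT i m, CNOT m i]) (0, 2^m) = (0, 2^i)"
  proof (cases "i = m")
    case False
    have "bt (2^m XOR 2^i) i" using False by (simp add: bit_xor_iff bit_exp_iff)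
    then show ?thesis using False by (simp add: cx_def bit_exp_iff xor.assoc)
  qed simp
  have "fc (map (\<lambda>c. CNOT c i) (tg n m i b)) (0, 2^i) = (0, 2^i XOR xl (tg n m i b))"
    by (rule spZ) (auto simp: bit_exp_iff tg_set)
  then show ?thesis using pre assms by (simp add: sz_def fc_append Zv_def xl_tg)
qed

definition cz :: "nat \<Rightarrow> nat \<Rightarrow> gate list" where
  "cz i j = [CNOT i j, S j, CNOT i j, S i, S j]"

lemma cz_fc: "i \<noteq> j \<Longrightarrow> fc (cz i j) v = (fst v, snd v XOR (if bt (fst v) j then 2^i else 0) XOR (if bt (fst v) i then 2^j else 0))"
  by (rule pair_bit_eqI) (auto simp: cz_def fg_bits bit_xor_iff bit_exp_iff)

fun czs :: "nat \<Rightarrow> nat list \<Rightarrow> gate list" where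
  "czs i [] = []"
| "czs i (j # js) = cz i j @ czs i js"

lemma czs_fc:
  assumes "i \<notin> set js" "\<forall>j\<in>set js. j < n"
  shows "fc (czs i js) v = (fst v, snd v XOR (if bt (fst v) i then xl js else 0) XOR (if par n (fst v AND xl js) then 2^i else 0))"
  using assms
proof (induction js arbitrary: v)
  case Nil then show ?case by simp
next
  case (Cons j js)
  have ij: "i \<noteq> j" "j < n" using Cons.prems by auto
  have p: "par n (fst v AND (2^j XOR xl js)) = (bt (fst v) j \<noteq> par n (fst v AND xl js))"
    using ij by (simp add: and_xor_distrib par_xor par_and_exp)
  have IH: "fc (czs i js) w = (fst w, snd w XOR (if bt (fst w) i then xl js else 0) XOR (if par n (fst w AND xl js) then 2^i else 0))" for w
    using Cons by simp
  show ?case using ij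
    by (simp only: czs.simps fc_append cz_fc[OF ij(1)] IH) (rule pair_bit_eqI, auto simp: bit_xor_iff p)
qed

definition phs :: "nat \<Rightarrow> nat \<Rightarrow> nat \<Rightarrow> nat \<Rightarrow> nat \<Rightarrow> gate list" where
  "phs n m i a b = czs i (tg n m i b) @ (if par n (a AND xl (tg n m i b)) \<noteq> bt b i then [S i] else [])"

lemma phs_fc:
  assumes "bt a i" "m \<le> i" "i < n" "b < 2^n" "\<forall>q<m. \<not> bt b q"
  shows "fc (phs n m i a b) (a, 0) = (a, b)"
proof -
  have c: "fc (czs i (tg n m i b)) (a, 0) = (a, xl (tg n m i b) XOR (if par n (a AND xl (tg n m i b)) then 2^i else 0))"
    using assms by (simp add: czs_fc[where n=n] tg_set)
  show ?thesis using assms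
    by (simp add: phs_def fc_append c xl_tg)
qed

lemma phs_Z: "fc (phs n m i a b) (0, y) = (0, y)"
proof -
  have "fc (czs i (tg n m i b)) (0, y) = (0, y)"
    by (simp add: czs_fc[where n=n] tg_set)
  then show ?thesis by (simp add: phs_def fc_append)
qed

definition pg :: "nat \<Rightarrow> nat \<Rightarrow> gate \<Rightarrow> bool" where
  "pg n m g = (case g of H q \<Rightarrow> False | S q \<Rightarrow> m \<le> q \<and> q < n
     | CNOT c t \<Rightarrow> m \<le> c \<and> c < n \<and> m \<le> t \<and> t < n \<and> c \<noteq> t)"

definition pcirc :: "nat \<Rightarrow> nat \<Rightarrow> gate list \<Rightarrow> bool" where
  "pcirc n m p = (\<forall>g\<in>set p. pg n m g)"

lemma pcirc_append[simp]: "pcirc n m (x @ y) = (pcirc n m x \<and> pcirc n m y)"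
  by (auto simp: pcirc_def)

lemma pcirc_rev[simp]: "pcirc n m (rev x) = pcirc n m x"
  by (auto simp: pcirc_def)

lemma pcirc_wf: "pcirc n m p \<Longrightarrow> wf_circuit n p"
  by (auto simp: pcirc_def wf_circuit_def pg_def wf_gate_def split: gate.splits)

lemma pcirc_mono: "m' \<le> m \<Longrightarrow> pcirc n m p \<Longrightarrow> pcirc n m' p"
  by (auto simp: pcirc_def pg_def split: gate.splits)

lemma pcirc_sx: "m \<le> i \<Longrightarrow> i < n \<Longrightarrow> pcirc n m (sx n m i a)"
  by (auto simp: pcirc_def pg_def sx_def tg_set)

lemma pcirc_sz: "m \<le> i \<Longrightarrow> i < n \<Longrightarrow> pcirc n m (sz n m i a)"
  by (auto simp: pcirc_def pg_def sz_def tg_set)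

lemma pcirc_czs: "m \<le> i \<Longrightarrow> i < n \<Longrightarrow> \<forall>j\<in>set js. m \<le> j \<and> j < n \<and> j \<noteq> i \<Longrightarrow> pcirc n m (czs i js)"
  by (induction js) (auto simp: pcirc_def pg_def cz_def)

lemma pcirc_phs: "m \<le> i \<Longrightarrow> i < n \<Longrightarrow> pcirc n m (phs n m i a b)"
  unfolding phs_def using pcirc_czs[of m i n "tg n m i b"] by (auto simp: tg_set pcirc_def pg_def)

lemma pg_fix: "pg n m g \<Longrightarrow> q < m \<Longrightarrow> fg g (Xv q) = Xv q \<and> fg g (Zv q) = Zv q"
  by (cases g) (auto simp: pg_def Xv_def Zv_def cx_def bit_exp_iff)

lemma pcirc_fix: "pcirc n m p \<Longrightarrow> q < m \<Longrightarrow> fc p (Xv q) = Xv q \<and> fc p (Zv q) = Zv q"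
  by (induction p) (auto simp: pcirc_def pg_fix)

lemma pg_Hcomm: "pg n (Suc m) g \<Longrightarrow> fg g (fg (H m) v) = fg (H m) (fg g v)"
  by (cases g; rule pair_bit_eqI) (auto simp: pg_def fg_bits)

lemma pcirc_Hcomm: "pcirc n (Suc m) p \<Longrightarrow> fc p (fg (H m) v) = fg (H m) (fc p v)"
proof (induction p arbitrary: v)
  case Nil then show ?case by simp
next
  case (Cons g p)
  have "pg n (Suc m) g" "pcirc n (Suc m) p" using Cons.prems by (auto simp: pcirc_def)
  then show ?case using Cons.IH by (simp only: fc.simps pg_Hcomm)
qed

definition hlay :: "nat \<Rightarrow> nat \<Rightarrow> gate list \<Rightarrow> bool" where
  "hlay n m hs = (\<forall>g\<in>set hs. \<exists>q. g = H q \<and> m \<le> q \<and> q < n)"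

lemma exists_bit: "(x::nat) \<noteq> 0 \<Longrightarrow> \<exists>i. bt x i"
proof (rule ccontr)
  assume "x \<noteq> 0" "\<not> (\<exists>i. bt x i)"
  then have "x = 0" by (intro bit_eqI) auto
  then show False using \<open>x \<noteq> 0\<close> by simp
qed

lemma peel:
  assumes "m \<le> n" "wf_circuit n c" "\<forall>q<m. fc c (Xv q) = Xv q \<and> fc c (Zv q) = Zv q"
  shows "\<exists>p1 hs p2. pcirc n m p1 \<and> pcirc n m p2 \<and> hlay n m hs \<and> length hs \<le> n - m \<and>
           (\<forall>v. vlt n v \<longrightarrow> fc c v = fc (p2 @ hs @ p1) v)"
  using assms
proof (induction "n - m" arbitrary: m c)
  case 0
  then have mn: "m = n" by simp
  have "fc c v = v" if "vlt n v" for v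
    by (rule gen_fix[of "fc c" n]) (use fc_lin[OF "0.prems"(2)] "0.prems"(3) mn that in auto)
  then show ?case by (intro exI[of _ "[]"]) (auto simp: pcirc_def hlay_def)
next
  case (Suc k)
  note wc = Suc.prems(2) and fixm = Suc.prems(3)
  have mn: "m < n" using Suc.hyps(2) by simp
  define u where "u = fc c (Zv m)"
  have vZ: "vlt n (Zv m)" by (simp add: vlt_def Zv_def mn)
  have ulv: "vlt n u" using vlt_fc[OF wc vZ] by (simp add: u_def)
  have usupp: "\<not> bt (fst u) q \<and> \<not> bt (snd u) q" if q: "q < m" for q
  proof -
    have qn: "q < n" using q mn by simp
    have "om n u (Xv q) = om n (Zv m) (Xv q)" using om_fc[OF wc, of "Zv m" "Xv q"] fixm q by (simp add: u_def)
    then have 1: "\<not> bt (snd u) q" using om_ZX[OF qn, of m] q om_X[OF qn, of u] by auto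
    have "om n u (Zv q) = om n (Zv m) (Zv q)" using om_fc[OF wc, of "Zv m" "Zv q"] fixm q by (simp add: u_def)
    then have 2: "\<not> bt (fst u) q" using om_ZZ[OF qn, of m] om_Z[OF qn, of u] by auto
    show ?thesis using 1 2 by simp
  qed
  have unz: "u \<noteq> (0,0)"
  proof
    assume u0: "u = (0,0)"
    have "Zv m = fc (rev c) u" using fc_rev[OF wc, of "Zv m"] by (simp add: u_def)
    also have "\<dots> = (0,0)" using fc_0[of n "rev c"] wc u0 by simp
    finally show False by (simp add: Zv_def)
  qed
  have "\<exists>p1 e. pcirc n m p1 \<and> (e = [] \<or> e = [H m]) \<and> fc (c @ rev p1 @ e) (Zv m) = Zv m"
  proof (cases "fst u = 0")
    case False
    obtain i where i: "bt (fst u) i" using exists_bit[OF False] by blast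
    have im: "m \<le> i" using usupp i by (meson not_le)
    have iN: "i < n" using i ulv lt2D by (auto simp: vlt_def)
    define p1 where "p1 = sx n m i (fst u) @ phs n m i (fst u) (snd u)"
    have pp: "pcirc n m p1" using pcirc_sx[OF im iN] pcirc_phs[OF im iN] by (simp add: p1_def)
    have "fc p1 (Xv m) = u"
      unfolding p1_def fc_append using sx_fc[OF i im iN] phs_fc[OF i im iN] ulv usupp by (simp add: vlt_def)
    then have "fc (rev p1) u = Xv m" using fc_rev[OF pcirc_wf[OF pp], of "Xv m"] by simp
    then have "fc (c @ rev p1 @ [H m]) (Zv m) = fg (H m) (Xv m)"
      by (simp add: fc_append u_def[symmetric])
    also have "fg (H m) (Xv m) = Zv m" by (simp add: Xv_def Zv_def bit_exp_iff)
    finally have "fc (c @ rev p1 @ [H m]) (Zv m) = Zv m" .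
    then show ?thesis using pp by blast
  next
    case True
    then have "snd u \<noteq> 0" using unz by (cases u) auto
    then obtain i where i: "bt (snd u) i" using exists_bit by blast
    have im: "m \<le> i" using usupp i by (meson not_le)
    have iN: "i < n" using i ulv lt2D by (auto simp: vlt_def)
    define p1 where "p1 = sz n m i (snd u)"
    have pp: "pcirc n m p1" using pcirc_sz[OF im iN] by (simp add: p1_def)
    have "fc p1 (Zv m) = u"
      unfolding p1_def using sz_fc[OF i im iN] ulv usupp True by (cases u) (simp add: vlt_def)
    then have "fc (rev p1) u = Zv m" using fc_rev[OF pcirc_wf[OF pp], of "Zv m"] by simp
    then have "fc (c @ rev p1 @ []) (Zv m) = Zv m"
      by (simp add: fc_append u_def[symmetric])
    then show ?thesis using pp by blast
  qed
  then obtain p1 e where p1: "pcirc n m p1" and e: "e = [] \<or> e = [H m]"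
    and he: "fc (c @ rev p1 @ e) (Zv m) = Zv m" by blast
  define c1 where "c1 = c @ rev p1 @ e"
  have we: "wf_circuit n e" using e mn by (auto simp: wf_circuit_def wf_gate_def)
  have wc1: "wf_circuit n c1" using wc pcirc_wf[OF p1] we by (simp add: c1_def)
  have efix: "fc e (Xv q) = Xv q \<and> fc e (Zv q) = Zv q" if "q < m" for q
    using e that by (auto simp: Xv_def Zv_def bit_exp_iff)
  have einv: "fc e (fc e x) = x" for x
    using e fg_invol[of n "H m" x] mn by (auto simp: wf_gate_def)
  have c1fix: "fc c1 (Xv q) = Xv q \<and> fc c1 (Zv q) = Zv q" if q: "q < m" for q
    using fixm q pcirc_fix[of n m "rev p1" q] p1 efix[OF q] by (simp add: c1_def fc_append)
  define v where "v = fc (rev c1) (Xv m)"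
  have vX: "fc c1 v = Xv m" using fc_rev2[OF wc1] by (simp add: v_def)
  have vXl: "vlt n (Xv m)" by (simp add: vlt_def Xv_def mn)
  have vlv: "vlt n v" using vlt_fc[of n "rev c1" "Xv m"] wc1 vXl by (simp add: v_def)
  have c1Z: "fc c1 (Zv m) = Zv m" using he by (simp add: c1_def)
  have vm: "bt (fst v) m"
  proof -
    have "om n v (Zv m) = om n (Xv m) (Zv m)" using om_fc[OF wc1, of v "Zv m"] vX c1Z by simp
    then show ?thesis using om_XZ[OF mn] om_Z[OF mn, of v] by simp
  qed
  have vsupp: "\<not> bt (fst v) q \<and> \<not> bt (snd v) q" if q: "q < m" for q
  proof -
    have qn: "q < n" using q mn by simp
    have "om n v (Xv q) = om n (Xv m) (Xv q)" using om_fc[OF wc1, of v "Xv q"] vX c1fix[OF q] by simp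
    then have 1: "\<not> bt (snd v) q" using om_XX[OF qn, of m] om_X[OF qn, of v] by auto
    have "om n v (Zv q) = om n (Xv m) (Zv q)" using om_fc[OF wc1, of v "Zv q"] vX c1fix[OF q] by simp
    then have 2: "\<not> bt (fst v) q" using om_XZ'[OF qn, of m] q om_Z[OF qn, of v] by auto
    show ?thesis using 1 2 by simp
  qed
  define r where "r = sx n m m (fst v) @ phs n m m (fst v) (snd v)"
  have pr: "pcirc n m r" using pcirc_sx[OF _ mn] pcirc_phs[OF _ mn] by (simp add: r_def)
  have rX: "fc r (Xv m) = v"
    unfolding r_def fc_append using sx_fc[OF vm _ mn] phs_fc[OF vm _ mn] vlv vsupp by (simp add: vlt_def)
  have rZ: "fc r (Zv m) = Zv m"
    unfolding r_def fc_append using sx_Z phs_Z by (simp add: Zv_def)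
  define c2 where "c2 = r @ c1"
  have wc2: "wf_circuit n c2" using wc1 pcirc_wf[OF pr] by (simp add: c2_def)
  have c2fix: "\<forall>q<Suc m. fc c2 (Xv q) = Xv q \<and> fc c2 (Zv q) = Zv q"
  proof (intro allI impI)
    fix q assume q: "q < Suc m"
    show "fc c2 (Xv q) = Xv q \<and> fc c2 (Zv q) = Zv q"
    proof (cases "q = m")
      case True
      then show ?thesis using rX vX rZ c1Z by (simp add: c2_def fc_append)
    next
      case False
      then have "q < m" using q by simp
      then show ?thesis using pcirc_fix[OF pr] c1fix by (simp add: c2_def fc_append)
    qed
  qed
  obtain p1' hs' p2' where IH: "pcirc n (Suc m) p1'" "pcirc n (Suc m) p2'" "hlay n (Suc m) hs'"
      "length hs' \<le> n - Suc m" "\<forall>w. vlt n w \<longrightarrow> fc c2 w = fc (p2' @ hs' @ p1') w"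
    using Suc.hyps(1)[of "Suc m" c2] Suc.hyps(2) mn wc2 c2fix by fastforce
  have eq: "fc c w = fc ((rev r @ p2') @ (hs' @ e) @ (p1' @ p1)) w" if w: "vlt n w" for w
  proof -
    define w' where "w' = fc (rev r) w"
    have w'l: "vlt n w'" using vlt_fc[of n "rev r" w] pcirc_wf[OF pr] w by (simp add: w'_def)
    have "fc c2 w' = fc c1 w" using fc_rev2[OF pcirc_wf[OF pr]] by (simp add: c2_def fc_append w'_def)
    then have A: "fc c1 w = fc (p2' @ hs' @ p1') w'" using IH(5) w'l by simp
    have "fc c w = fc p1 (fc e (fc c1 w))"
      using einv fc_rev2[OF pcirc_wf[OF p1]] by (simp add: c1_def fc_append)
    also have "\<dots> = fc p1 (fc e (fc p1' (fc hs' (fc p2' w'))))" using A by (simp add: fc_append)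
    also have "\<dots> = fc p1 (fc p1' (fc e (fc hs' (fc p2' w'))))"
    proof -
      have "fc e (fc p1' x) = fc p1' (fc e x)" for x
        using e pcirc_Hcomm[OF IH(1), of x] by auto
      then show ?thesis by simp
    qed
    finally show ?thesis by (simp add: fc_append w'_def)
  qed
  show ?case
  proof (intro exI conjI)
    show "pcirc n m (p1' @ p1)" using pcirc_mono[OF _ IH(1)] p1 by simp
    show "pcirc n m (rev r @ p2')" using pcirc_mono[OF _ IH(2)] pr by simp
    show "hlay n m (hs' @ e)" using IH(3) e mn by (auto simp: hlay_def)
    show "length (hs' @ e) \<le> n - m" using IH(4) e mn by auto
    show "\<forall>v. vlt n v \<longrightarrow> fc c v = fc ((rev r @ p2') @ (hs' @ e) @ p1' @ p1) v" using eq by blast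
  qed
qed

fun app :: "nat \<Rightarrow> (nat \<Rightarrow> nat) \<Rightarrow> nat \<Rightarrow> nat" where
  "app 0 A x = 0"
| "app (Suc n) A x = app n A x XOR (if bt x n then A n else 0)"

lemma app_hom: "(\<And>x y. h (x XOR y) = h x XOR h y) \<Longrightarrow> app n (\<lambda>k. h (A k)) x = h (app n A x)"
proof (induction n)
  case 0
  have "h 0 = h 0 XOR h 0" using 0[of 0 0] by simp
  then show ?case by simp
next
  case (Suc n)
  have h0: "h 0 = 0" using Suc.prems[of 0 0] by simp
  show ?case using Suc by (simp add: h0)
qed

lemma app_lt: "(\<forall>k<n. A k < 2^N) \<Longrightarrow> app n A x < 2^N"
  by (induction n) auto

lemma app_xor: "app n A (x XOR y) = app n A x XOR app n A y"
  by (induction n) (auto simp: bit_xor_iff xor.assoc xor.left_commute)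

lemma app_low: "x < 2^j \<Longrightarrow> j \<le> n \<Longrightarrow> app n A x = app j A x"
proof (induction n)
  case 0 then show ?case by simp
next
  case (Suc n)
  show ?case
  proof (cases "j = Suc n")
    case False
    then have "j \<le> n" using Suc by simp
    moreover have "\<not> bt x n" using Suc.prems \<open>j \<le> n\<close> lt2D by fastforce
    ultimately show ?thesis using Suc by simp
  qed simp
qed

lemma app_zero: "(\<forall>l<k. \<not> bt x l) \<Longrightarrow> app k A x = 0"
  by (induction k) auto

lemma app_exp: "k < n \<Longrightarrow> app n A (2^k) = A k"
proof (induction n)
  case 0 then show ?case by simp
next
  case (Suc n)
  show ?case
  proof (cases "k = n")
    case True
    have "app n A (2^k) = 0" by (rule app_zero) (auto simp: bit_exp_iff True)
    then show ?thesis using True by (simp add: bit_exp_iff)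
  next
    case False
    then show ?thesis using Suc by (simp add: bit_exp_iff)
  qed
qed

definition rop :: "nat \<Rightarrow> nat \<Rightarrow> (nat \<Rightarrow> nat) \<Rightarrow> (nat \<Rightarrow> nat)" where
  "rop c t A = (\<lambda>k. cx c t (A k))"

fun aps :: "(nat \<times> nat) list \<Rightarrow> (nat \<Rightarrow> nat) \<Rightarrow> (nat \<Rightarrow> nat)" where
  "aps [] A = A"
| "aps ((c,t) # os) A = aps os (rop c t A)"

lemma aps_append: "aps (x @ y) A = aps y (aps x A)"
  by (induction x arbitrary: A) auto

definition vop :: "nat \<Rightarrow> (nat \<times> nat) list \<Rightarrow> bool" where
  "vop n os = (\<forall>(c,t)\<in>set os. c < n \<and> t < n \<and> c \<noteq> t)"

lemma vop_append[simp]: "vop n (x @ y) = (vop n x \<and> vop n y)"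
  by (auto simp: vop_def)

definition ok :: "nat \<Rightarrow> (nat \<Rightarrow> nat) \<Rightarrow> bool" where
  "ok n A = ((\<forall>k<n. A k < 2^n) \<and> inj_on (app n A) {..<2^n})"

lemma cx_inj: "c \<noteq> t \<Longrightarrow> inj (cx c t)"
  by (metis cx_inv injI)

lemma ok_rop: "c < n \<Longrightarrow> t < n \<Longrightarrow> c \<noteq> t \<Longrightarrow> ok n A \<Longrightarrow> ok n (rop c t A)"
proof -
  assume ct: "c < n" "t < n" "c \<noteq> t" and o: "ok n A"
  have e: "app n (rop c t A) x = cx c t (app n A x)" for x
    unfolding rop_def by (rule app_hom) (simp add: cx_xor[OF ct(3)])
  have "inj_on (cx c t \<circ> app n A) {..<2^n}"
    using o cx_inj[OF ct(3)] by (auto simp: ok_def intro: comp_inj_on inj_on_subset)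
  moreover have "app n (rop c t A) = cx c t \<circ> app n A" by (rule ext) (simp add: e)
  ultimately have "inj_on (app n (rop c t A)) {..<2^n}" by simp
  then show ?thesis using o ct by (auto simp: ok_def rop_def)
qed

lemma ok_aps: "vop n os \<Longrightarrow> ok n A \<Longrightarrow> ok n (aps os A)"
  by (induction os arbitrary: A) (auto simp: vop_def ok_rop)

definition lowc :: "nat \<Rightarrow> (nat \<Rightarrow> nat) \<Rightarrow> bool" where
  "lowc j A = (\<forall>k<j. bt (A k) k \<and> (\<forall>r. k < r \<longrightarrow> \<not> bt (A k) r))"

definition lou :: "nat \<Rightarrow> (nat \<Rightarrow> nat) \<Rightarrow> bool" where
  "lou n A = (\<forall>k<n. bt (A k) k \<and> (\<forall>r<k. \<not> bt (A k) r))"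

definition down :: "(nat \<times> nat) list \<Rightarrow> bool" where
  "down os = (\<forall>(c,t)\<in>set os. c < t)"

lemma down_append[simp]: "down (x @ y) = (down x \<and> down y)"
  by (auto simp: down_def)

lemma lou_rop: "c < t \<Longrightarrow> lou n A \<Longrightarrow> lou n (rop c t A)"
  unfolding lou_def rop_def by (auto simp: bt_cx)

lemma lou_aps: "down os \<Longrightarrow> lou n A \<Longrightarrow> lou n (aps os A)"
  by (induction os arbitrary: A) (auto simp: down_def lou_rop)

lemma lowc_rop: "s \<le> c \<Longrightarrow> c \<noteq> t \<Longrightarrow> lowc s A \<Longrightarrow> lowc s (rop c t A)"
proof -
  assume a: "s \<le> c" "c \<noteq> t" "lowc s A"
  have "rop c t A k = A k" if "k < s" for k
    using a that by (auto simp: rop_def cx_def lowc_def)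
  then show ?thesis using a(3) by (simp add: lowc_def)
qed

lemma lowc_aps: "\<forall>(c,t)\<in>set os. s \<le> c \<and> c \<noteq> t \<Longrightarrow> lowc s A \<Longrightarrow> lowc s (aps os A)"
  by (induction os arbitrary: A) (auto simp: lowc_rop)

lemma lowc_lt: "lowc j A \<Longrightarrow> k < j \<Longrightarrow> A k < 2^(Suc k)"
  by (rule lt2I) (metis lowc_def not_less_eq)

lemma pivot:
  assumes o: "ok n A" and l: "lowc c A" and cn: "c < n"
  shows "\<exists>r. c \<le> r \<and> r < n \<and> bt (A c) r"
proof (rule ccontr)
  assume no: "\<not> (\<exists>r. c \<le> r \<and> r < n \<and> bt (A c) r)"
  have Acn: "A c < 2^n" using o cn by (simp add: ok_def)
  have Ac: "A c < 2^c"
  proof (rule lt2I)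
    fix q assume "bt (A c) q"
    then have "q < n" using Acn lt2D by blast
    then show "q < c" using no \<open>bt (A c) q\<close> by (meson not_le)
  qed
  have Ak: "\<forall>k<Suc c. A k < 2^c"
  proof (intro allI impI)
    fix k assume "k < Suc c"
    then show "A k < 2^c"
    proof (cases "k = c")
      case False
      then have "k < c" using \<open>k < Suc c\<close> by simp
      then have "A k < 2^(Suc k)" using lowc_lt[OF l] by simp
      also have "\<dots> \<le> 2^c" using power_increasing[of "Suc k" c "2::nat"] \<open>k < c\<close> by simp
      finally show ?thesis .
    qed (use Ac in simp)
  qed
  have "(2::nat)^(Suc c) \<le> 2^n" using power_increasing[of "Suc c" n "2::nat"] cn by simp
  then have sub: "{..<2^(Suc c)} \<subseteq> {..<(2::nat)^n}" by auto
  have inj: "inj_on (app n A) {..<2^(Suc c)}" using o sub by (auto simp: ok_def intro: inj_on_subset)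
  have img: "app n A ` {..<2^(Suc c)} \<subseteq> {..<2^c}"
  proof
    fix y assume "y \<in> app n A ` {..<2^(Suc c)}"
    then obtain x where x: "x < 2^Suc c" "y = app n A x" by auto
    have "app n A x = app (Suc c) A x" using app_low[OF x(1)] cn by simp
    also have "\<dots> < 2^c" using app_lt[OF Ak] .
    finally show "y \<in> {..<2^c}" using x by simp
  qed
  have "card {..<(2::nat)^(Suc c)} \<le> card {..<(2::nat)^c}"
    using card_inj_on_le[OF inj img] by simp
  then show False by simp
qed

lemma elim_col: "c \<notin> set rs \<Longrightarrow> aps (map (\<lambda>r. (c, r)) rs) A = (\<lambda>k. A k XOR (if bt (A k) c then xl rs else 0))"
proof (induction rs arbitrary: A)
  case Nil then show ?case by (simp add: fun_eq_iff)
next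
  case (Cons r rs)
  have "aps (map (\<lambda>r. (c, r)) (r # rs)) A = aps (map (\<lambda>r. (c, r)) rs) (rop c r A)" by simp
  also have "\<dots> = (\<lambda>k. rop c r A k XOR (if bt (rop c r A k) c then xl rs else 0))" using Cons by simp
  also have "\<dots> = (\<lambda>k. A k XOR (if bt (A k) c then xl (r # rs) else 0))"
  proof
    fix k
    have "r \<noteq> c" using Cons by auto
    then have b: "bt (rop c r A k) c = bt (A k) c" by (auto simp: rop_def bt_cx)
    show "rop c r A k XOR (if bt (rop c r A k) c then xl rs else 0) = A k XOR (if bt (A k) c then xl (r # rs) else 0)"
      unfolding b by (auto simp: rop_def cx_def xor.assoc)
  qed
  finally show ?case .
qed

definition pat :: "nat \<Rightarrow> nat \<Rightarrow> (nat \<Rightarrow> nat) \<Rightarrow> nat \<Rightarrow> nat" where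
  "pat s w A r = ob w (\<lambda>i. bt (A (s+i)) r)"

lemma pat_rop: "c \<noteq> t \<Longrightarrow> pat s w (rop c t A) r = (if r = t then pat s w A t XOR pat s w A c else pat s w A r)"
  by (rule bit_eqI) (auto simp: pat_def bt_ob rop_def bt_cx bit_xor_iff)

lemma pat_lt: "pat s w A r < 2^w"
  by (simp add: pat_def ob_lt)

definition nz :: "nat \<Rightarrow> nat \<Rightarrow> nat \<Rightarrow> nat \<Rightarrow> (nat \<Rightarrow> nat) \<Rightarrow> nat set" where
  "nz s' n s w A = {r. s' \<le> r \<and> r < n \<and> pat s w A r \<noteq> 0}"

lemma nz_finite: "finite (nz s' n s w A)"
  by (rule finite_subset[of _ "{..<n}"]) (auto simp: nz_def)

lemma dedupe:
  assumes "s' + d \<le> n" "s' < n \<or> d = 0"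
  shows "\<exists>os. vop n os \<and> length os \<le> d \<and> (\<forall>(c,t)\<in>set os. s' \<le> c \<and> c < t) \<and>
    (\<forall>r1 r2. s' \<le> r1 \<longrightarrow> r1 < r2 \<longrightarrow> r2 < s' + d \<longrightarrow> pat s w (aps os A) r1 = pat s w (aps os A) r2 \<longrightarrow> pat s w (aps os A) r2 = 0)"
  using assms(1)
proof (induction d)
  case 0 then show ?case by (intro exI[of _ "[]"]) (auto simp: vop_def)
next
  case (Suc d)
  then obtain os where os: "vop n os" "length os \<le> d" "\<forall>(c,t)\<in>set os. s' \<le> c \<and> c < t"
    "\<forall>r1 r2. s' \<le> r1 \<longrightarrow> r1 < r2 \<longrightarrow> r2 < s' + d \<longrightarrow> pat s w (aps os A) r1 = pat s w (aps os A) r2 \<longrightarrow> pat s w (aps os A) r2 = 0"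
    by auto
  define r0 where "r0 = s' + d"
  have r0n: "r0 < n" using Suc.prems by (simp add: r0_def)
  define A1 where "A1 = aps os A"
  show ?case
  proof (cases "\<exists>r1. s' \<le> r1 \<and> r1 < r0 \<and> pat s w A1 r1 = pat s w A1 r0 \<and> pat s w A1 r0 \<noteq> 0")
    case True
    then obtain r1 where r1: "s' \<le> r1" "r1 < r0" "pat s w A1 r1 = pat s w A1 r0" by blast
    define os' where "os' = os @ [(r1, r0)]"
    have A2: "aps os' A = rop r1 r0 A1" by (simp add: os'_def aps_append A1_def)
    have p0: "pat s w (aps os' A) r0 = 0" using r1 by (simp add: A2 pat_rop)
    have pr: "pat s w (aps os' A) r = pat s w A1 r" if "r \<noteq> r0" for r
      using r1 that by (simp add: A2 pat_rop)
    show ?thesis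
    proof (intro exI conjI)
      show "vop n os'" using os r1 r0n by (auto simp: os'_def vop_def)
      show "length os' \<le> Suc d" using os by (simp add: os'_def)
      show "\<forall>(c,t)\<in>set os'. s' \<le> c \<and> c < t" using os r1 by (auto simp: os'_def)
      show "\<forall>r1 r2. s' \<le> r1 \<longrightarrow> r1 < r2 \<longrightarrow> r2 < s' + Suc d \<longrightarrow> pat s w (aps os' A) r1 = pat s w (aps os' A) r2 \<longrightarrow> pat s w (aps os' A) r2 = 0"
      proof (intro allI impI)
        fix a b assume ab: "s' \<le> a" "a < b" "b < s' + Suc d" "pat s w (aps os' A) a = pat s w (aps os' A) b"
        show "pat s w (aps os' A) b = 0"
        proof (cases "b = r0")
          case False
          then have "b < r0" using ab by (simp add: r0_def)
          then show ?thesis using ab os(4) pr[of a] pr[of b] \<open>b < r0\<close> by (simp add: A1_def r0_def)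
        qed (use p0 in simp)
      qed
    qed
  next
    case False
    show ?thesis
    proof (intro exI conjI)
      show "vop n os" "length os \<le> Suc d" "\<forall>(c,t)\<in>set os. s' \<le> c \<and> c < t" using os by auto
      show "\<forall>r1 r2. s' \<le> r1 \<longrightarrow> r1 < r2 \<longrightarrow> r2 < s' + Suc d \<longrightarrow> pat s w (aps os A) r1 = pat s w (aps os A) r2 \<longrightarrow> pat s w (aps os A) r2 = 0"
      proof (intro allI impI)
        fix a b assume ab: "s' \<le> a" "a < b" "b < s' + Suc d" "pat s w (aps os A) a = pat s w (aps os A) b"
        show "pat s w (aps os A) b = 0"
        proof (cases "b = r0")
          case True
          then show ?thesis using False ab by (auto simp: A1_def)
        next
          case F: False
          then show ?thesis using ab os(4) by (simp add: r0_def)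
        qed
      qed
    qed
  qed
qed

lemma nz_card:
  assumes "\<forall>r1 r2. s' \<le> r1 \<longrightarrow> r1 < r2 \<longrightarrow> r2 < n \<longrightarrow> pat s w A r1 = pat s w A r2 \<longrightarrow> pat s w A r2 = 0"
  shows "card (nz s' n s w A) \<le> 2^w"
proof -
  have inj: "inj_on (pat s w A) (nz s' n s w A)"
  proof (rule inj_onI)
    fix a b assume a: "a \<in> nz s' n s w A" and b: "b \<in> nz s' n s w A" and e: "pat s w A a = pat s w A b"
    show "a = b"
    proof (rule ccontr)
      assume "a \<noteq> b"
      then consider "a < b" | "b < a" by linarith
      then show False
      proof cases
        case 1
        then have "pat s w A b = 0" using assms[rule_format, of a b] a b e by (auto simp: nz_def)
        then show False using b by (simp add: nz_def)
      next
        case 2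
        then have "pat s w A a = 0" using assms[rule_format, of b a] a b e by (auto simp: nz_def)
        then show False using a by (simp add: nz_def)
      qed
    qed
  qed
  have "pat s w A ` nz s' n s w A \<subseteq> {..<2^w}" using pat_lt by auto
  from card_inj_on_le[OF inj this] show ?thesis by simp
qed

lemma colstep:
  assumes o: "ok n A" and l: "lowc c A" and sc: "s \<le> c" "c < s + w" and sw: "s + w \<le> n"
  shows "\<exists>os. vop n os \<and> length os \<le> w + card (nz (s+w) n s w A) \<and> lowc (Suc c) (aps os A)
    \<and> nz (s+w) n s w (aps os A) \<subseteq> nz (s+w) n s w A \<and> (\<forall>(c',t)\<in>set os. s \<le> c') \<and> (lou n A \<longrightarrow> down os)"
proof -
  have cn: "c < n" using sc sw by simp
  have "\<exists>os1. vop n os1 \<and> length os1 \<le> 1 \<and> bt (aps os1 A c) c \<and> lowc c (aps os1 A) \<and>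
      nz (s+w) n s w (aps os1 A) = nz (s+w) n s w A \<and> (\<forall>(c',t)\<in>set os1. s \<le> c') \<and> (lou n A \<longrightarrow> os1 = [])"
  proof (cases "bt (A c) c")
    case True then show ?thesis using l by (intro exI[of _ "[]"]) (auto simp: vop_def)
  next
    case False
    obtain r where r: "c \<le> r" "r < n" "bt (A c) r" using pivot[OF o l cn] by blast
    have rc: "r \<noteq> c" using False r by auto
    have pr: "pat s w (rop r c A) x = pat s w A x" if "s + w \<le> x" for x
      using pat_rop[OF rc, of s w A x] that sc by auto
    show ?thesis
    proof (intro exI conjI)
      show "vop n [(r,c)]" using r cn rc by (simp add: vop_def)
      show "bt (aps [(r,c)] A c) c" using r False rc by (simp add: rop_def bt_cx)
      show "lowc c (aps [(r,c)] A)" using lowc_rop[of c r c A] r rc l by simp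
      show "nz (s+w) n s w (aps [(r,c)] A) = nz (s+w) n s w A" using pr by (auto simp: nz_def)
      show "\<forall>(c',t)\<in>set [(r,c)]. s \<le> c'" using r sc by simp
      show "lou n A \<longrightarrow> [(r,c)] = []" using False cn by (auto simp: lou_def)
    qed simp
  qed
  then obtain os1 where os1: "vop n os1" "length os1 \<le> 1" "bt (aps os1 A c) c" "lowc c (aps os1 A)"
      "nz (s+w) n s w (aps os1 A) = nz (s+w) n s w A" "\<forall>(c',t)\<in>set os1. s \<le> c'" "lou n A \<longrightarrow> os1 = []"
    by blast
  define A1 where "A1 = aps os1 A"
  have A1cc: "bt (A1 c) c" and l1: "lowc c A1" using os1 by (auto simp: A1_def)
  have o1: "ok n A1" using ok_aps[OF os1(1) o] by (simp add: A1_def)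
  have A1c: "A1 c < 2^n" using o1 cn by (simp add: ok_def)
  define rs where "rs = filter (\<lambda>r. bt (A1 c) r) [Suc c..<n]"
  have rs_set: "r \<in> set rs \<longleftrightarrow> bt (A1 c) r \<and> c < r \<and> r < n" for r by (auto simp: rs_def)
  have crs: "c \<notin> set rs" by (simp add: rs_set)
  define os2 where "os2 = map (\<lambda>r. (c, r)) rs"
  have A2: "aps os2 A1 = (\<lambda>k. A1 k XOR (if bt (A1 k) c then xl rs else 0))"
    unfolding os2_def by (rule elim_col[OF crs])
  have drs: "distinct rs" by (simp add: rs_def)
  have l2: "lowc (Suc c) (aps os2 A1)"
    unfolding lowc_def
  proof (rule allI, rule impI, rule conjI)
    fix k assume k: "k < Suc c"
    show "bt (aps os2 A1 k) k"
    proof (cases "k = c")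
      case True then show ?thesis using A1cc crs by (simp add: A2 bit_xor_iff bt_xl[OF drs])
    next
      case False
      then have "k < c" using k by simp
      then have "\<not> bt (A1 k) c" "bt (A1 k) k" using l1 by (auto simp: lowc_def)
      then show ?thesis by (simp add: A2)
    qed
    show "\<forall>r>k. \<not> bt (aps os2 A1 k) r"
    proof (intro allI impI)
      fix r assume r: "k < r"
      show "\<not> bt (aps os2 A1 k) r"
      proof (cases "k = c")
        case True
        have "bt (A1 c) r \<longrightarrow> r < n" using A1c lt2D by blast
        then show ?thesis using True r A1cc by (auto simp: A2 bit_xor_iff bt_xl[OF drs] rs_set)
      next
        case False
        then have "k < c" using k by simp
        then have "\<not> bt (A1 k) c" "\<not> bt (A1 k) r" using l1 r by (auto simp: lowc_def)
        then show ?thesis by (simp add: A2)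
      qed
    qed
  qed
  have sub: "set rs \<subseteq> {Suc c..<s+w} \<union> nz (s+w) n s w A1"
  proof
    fix r assume r: "r \<in> set rs"
    show "r \<in> {Suc c..<s+w} \<union> nz (s+w) n s w A1"
    proof (cases "r < s + w")
      case True then show ?thesis using r by (auto simp: rs_set)
    next
      case False
      have "bt (pat s w A1 r) (c - s)" using r sc by (auto simp: pat_def bt_ob rs_set)
      then have "pat s w A1 r \<noteq> 0" by (cases "pat s w A1 r = 0") auto
      then show ?thesis using r False by (auto simp: nz_def rs_set)
    qed
  qed
  have "length rs = card (set rs)" using distinct_card[OF drs] by simp
  also have "\<dots> \<le> card ({Suc c..<s+w} \<union> nz (s+w) n s w A1)"
    by (rule card_mono) (use sub nz_finite in auto)
  also have "\<dots> \<le> card {Suc c..<s+w} + card (nz (s+w) n s w A1)" by (rule card_Un_le)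
  also have "\<dots> \<le> (w - 1) + card (nz (s+w) n s w A)" using sc os1(5) by (simp add: A1_def)
  finally have lrs: "length rs \<le> (w - 1) + card (nz (s+w) n s w A)" .
  have nzsub: "nz (s+w) n s w (aps os2 A1) \<subseteq> nz (s+w) n s w A1"
  proof
    fix r assume r: "r \<in> nz (s+w) n s w (aps os2 A1)"
    show "r \<in> nz (s+w) n s w A1"
    proof (cases "r \<in> set rs")
      case True then show ?thesis using sub r by (auto simp: nz_def)
    next
      case False
      have "pat s w (aps os2 A1) r = pat s w A1 r"
        by (rule bit_eqI) (use False in \<open>auto simp: pat_def bt_ob A2 bit_xor_iff bt_xl[OF drs]\<close>)
      then show ?thesis using r by (simp add: nz_def)
    qed
  qed
  show ?thesis
  proof (intro exI conjI)
    show "vop n (os1 @ os2)" using os1(1) cn by (auto simp: vop_def os2_def rs_set)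
    show "length (os1 @ os2) \<le> w + card (nz (s+w) n s w A)" using os1(2) lrs sc by (simp add: os2_def)
    show "lowc (Suc c) (aps (os1 @ os2) A)" using l2 by (simp add: aps_append A1_def)
    show "nz (s+w) n s w (aps (os1 @ os2) A) \<subseteq> nz (s+w) n s w A"
      using nzsub os1(5) by (simp add: aps_append A1_def)
    show "\<forall>(c',t)\<in>set (os1 @ os2). s \<le> c'" using os1(6) sc by (auto simp: os2_def)
    show "lou n A \<longrightarrow> down (os1 @ os2)" using os1(7) by (auto simp: down_def os2_def rs_set)
  qed
qed

lemma phase2:
  assumes o: "ok n A" and l: "lowc s A" and sw: "s + w \<le> n"
  shows "j \<le> w \<Longrightarrow> \<exists>os. vop n os \<and> length os \<le> j * (w + card (nz (s+w) n s w A)) \<and> lowc (s + j) (aps os A)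
    \<and> nz (s+w) n s w (aps os A) \<subseteq> nz (s+w) n s w A \<and> (\<forall>(c',t)\<in>set os. s \<le> c') \<and> (lou n A \<longrightarrow> down os)"
proof (induction j)
  case 0 then show ?case using l by (intro exI[of _ "[]"]) (auto simp: vop_def down_def)
next
  case (Suc j)
  then obtain os where os: "vop n os" "length os \<le> j * (w + card (nz (s+w) n s w A))" "lowc (s + j) (aps os A)"
    "nz (s+w) n s w (aps os A) \<subseteq> nz (s+w) n s w A" "\<forall>(c',t)\<in>set os. s \<le> c'" "lou n A \<longrightarrow> down os" by auto
  define A' where "A' = aps os A"
  have o': "ok n A'" using ok_aps[OF os(1) o] by (simp add: A'_def)
  obtain os' where os': "vop n os'" "length os' \<le> w + card (nz (s+w) n s w A')" "lowc (Suc (s + j)) (aps os' A')"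
    "nz (s+w) n s w (aps os' A') \<subseteq> nz (s+w) n s w A'" "\<forall>(c',t)\<in>set os'. s \<le> c'" "lou n A' \<longrightarrow> down os'"
    using colstep[OF o' os(3)[folded A'_def], of s w] Suc.prems sw by auto
  have cc: "card (nz (s+w) n s w A') \<le> card (nz (s+w) n s w A)"
    by (rule card_mono[OF nz_finite]) (use os(4) in \<open>simp add: A'_def\<close>)
  show ?case
  proof (intro exI conjI)
    show "vop n (os @ os')" using os os' by simp
    show "length (os @ os') \<le> Suc j * (w + card (nz (s+w) n s w A))" using os(2) os'(2) cc by simp
    show "lowc (s + Suc j) (aps (os @ os') A)" using os'(3) by (simp add: aps_append A'_def)
    show "nz (s+w) n s w (aps (os @ os') A) \<subseteq> nz (s+w) n s w A" using os'(4) os(4) by (auto simp: aps_append A'_def)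
    show "\<forall>(c',t)\<in>set (os @ os'). s \<le> c'" using os(5) os'(5) by auto
    show "lou n A \<longrightarrow> down (os @ os')" using os(6) os'(6) lou_aps[of os n A] by (auto simp: A'_def)
  qed
qed

lemma block:
  assumes o: "ok n A" and l: "lowc s A" and sn: "s < n" and m: "1 \<le> m"
  shows "\<exists>os. vop n os \<and> length os \<le> n + m * (m + 2^m) \<and> lowc (min (s+m) n) (aps os A) \<and> (lou n A \<longrightarrow> down os)"
proof -
  define w where "w = min (s+m) n - s"
  have sw: "s + w = min (s+m) n" "s + w \<le> n" "w \<le> m" using sn by (auto simp: w_def)
  obtain os1 where os1: "vop n os1" "length os1 \<le> n - (s+w)" "\<forall>(c,t)\<in>set os1. s+w \<le> c \<and> c < t"
    "\<forall>r1 r2. s+w \<le> r1 \<longrightarrow> r1 < r2 \<longrightarrow> r2 < (s+w) + (n - (s+w)) \<longrightarrow> pat s w (aps os1 A) r1 = pat s w (aps os1 A) r2 \<longrightarrow> pat s w (aps os1 A) r2 = 0"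
    using dedupe[of "s+w" "n - (s+w)" n s w A] sw by (cases "s + w < n") auto
  define A1 where "A1 = aps os1 A"
  have o1: "ok n A1" using ok_aps[OF os1(1) o] by (simp add: A1_def)
  have l1: "lowc s A1" unfolding A1_def by (rule lowc_aps) (use os1(3) l in auto)
  have cnz: "card (nz (s+w) n s w A1) \<le> 2^w"
    by (rule nz_card) (use os1(4) sw in \<open>simp add: A1_def\<close>)
  obtain os2 where os2: "vop n os2" "length os2 \<le> w * (w + card (nz (s+w) n s w A1))" "lowc (s + w) (aps os2 A1)"
    "lou n A1 \<longrightarrow> down os2"
    using phase2[OF o1 l1 sw(2), of w] by auto
  have "w * (w + card (nz (s+w) n s w A1)) \<le> m * (m + 2^m)"
  proof -
    have "(2::nat)^w \<le> 2^m" using sw(3) power_increasing[of w m "2::nat"] by simp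
    then have "w + card (nz (s+w) n s w A1) \<le> m + 2^m"
      using cnz sw(3) by linarith
    then show ?thesis using sw(3) by (simp add: mult_le_mono)
  qed
  then have len: "length (os1 @ os2) \<le> n + m * (m + 2^m)" using os1(2) os2(2) by simp
  have dn1: "down os1" using os1(3) by (auto simp: down_def)
  show ?thesis
  proof (intro exI conjI)
    show "vop n (os1 @ os2)" using os1 os2 by simp
    show "length (os1 @ os2) \<le> n + m * (m + 2^m)" by (rule len)
    show "lowc (min (s+m) n) (aps (os1 @ os2) A)" using os2(3) sw by (simp add: aps_append A1_def)
    show "lou n A \<longrightarrow> down (os1 @ os2)" using dn1 os2(4) lou_aps[OF dn1, of n A] by (simp add: A1_def)
  qed
qed

lemma lowc_0: "lowc 0 A" by (simp add: lowc_def)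

lemma lower_pass:
  assumes o: "ok n A" and m: "1 \<le> m"
  shows "\<exists>os. vop n os \<and> length os \<le> b * (n + m * (m + 2^m)) \<and> lowc (min (b*m) n) (aps os A) \<and> (lou n A \<longrightarrow> down os)"
proof (induction b)
  case 0 then show ?case by (intro exI[of _ "[]"]) (auto simp: vop_def down_def lowc_0)
next
  case (Suc b)
  then obtain os where os: "vop n os" "length os \<le> b * (n + m * (m + 2^m))" "lowc (min (b*m) n) (aps os A)" "lou n A \<longrightarrow> down os"
    by auto
  show ?case
  proof (cases "n \<le> b * m")
    case True
    then have "min (Suc b * m) n = min (b * m) n" by simp
    then show ?thesis using os by (intro exI[of _ os]) auto
  next
    case False
    define A' where "A' = aps os A"
    have o': "ok n A'" using ok_aps[OF os(1) o] by (simp add: A'_def)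
    have l': "lowc (b*m) A'" using os(3) False by (simp add: A'_def)
    obtain os' where os': "vop n os'" "length os' \<le> n + m * (m + 2^m)" "lowc (min (b*m+m) n) (aps os' A')" "lou n A' \<longrightarrow> down os'"
      using block[OF o' l' _ m] False by auto
    show ?thesis
    proof (intro exI conjI)
      show "vop n (os @ os')" using os os' by simp
      show "length (os @ os') \<le> Suc b * (n + m * (m + 2^m))" using os(2) os'(2) by simp
      show "lowc (min (Suc b * m) n) (aps (os @ os') A)" using os'(3) by (simp add: aps_append A'_def add.commute)
      show "lou n A \<longrightarrow> down (os @ os')" using os(4) os'(4) lou_aps[of os n A] by (auto simp: A'_def)
    qed
  qed
qed

definition rv :: "nat \<Rightarrow> nat \<Rightarrow> nat" where
  "rv n x = ob n (\<lambda>k. bt x (n - 1 - k))"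

lemma bt_rv: "bt (rv n x) k = (k < n \<and> bt x (n - 1 - k))"
  by (simp add: rv_def bt_ob)

lemma rv_lt: "rv n x < 2^n"
  by (simp add: rv_def ob_lt)

lemma rv_exp: "j < n \<Longrightarrow> rv n (2^j) = 2^(n - 1 - j)"
  by (rule bit_eqI) (auto simp: bt_rv bit_exp_iff)

lemma rv_rv: "x < 2^n \<Longrightarrow> rv n (rv n x) = x"
  by (rule bit_eqI) (auto simp: bt_rv dest: lt2D)

lemma cx_rv: "c < n \<Longrightarrow> t < n \<Longrightarrow> c \<noteq> t \<Longrightarrow> cx (n - Suc c) (n - Suc t) (rv n x) = rv n (cx c t x)"
  by (rule bit_eqI) (auto simp: bt_rv bt_cx)

fun cxs :: "(nat \<times> nat) list \<Rightarrow> nat \<Rightarrow> nat" where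
  "cxs [] x = x"
| "cxs ((c,t) # os) x = cxs os (cx c t x)"

lemma aps_cxs: "aps os A k = cxs os (A k)"
  by (induction os arbitrary: A) (auto simp: rop_def)

lemma cxs_append: "cxs (x @ y) v = cxs y (cxs x v)"
  by (induction x arbitrary: v) auto

definition rho2 :: "nat \<Rightarrow> nat \<times> nat \<Rightarrow> nat \<times> nat" where
  "rho2 n p = (n - 1 - fst p, n - 1 - snd p)"

lemma cxs_rv: "vop n os \<Longrightarrow> cxs (map (rho2 n) os) (rv n x) = rv n (cxs os x)"
  by (induction os arbitrary: x) (auto simp: vop_def rho2_def cx_rv)

lemma vop_rho: "vop n os \<Longrightarrow> vop n (map (rho2 n) os)"
  by (auto simp: vop_def rho2_def)

lemma cxs_rev: "vop n os \<Longrightarrow> cxs (rev os) (cxs os x) = x"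
  by (induction os arbitrary: x) (auto simp: vop_def cxs_append)

lemma lou_bit: "lou n B \<Longrightarrow> l \<le> n \<Longrightarrow> (\<forall>k<l. \<not> bt z k) \<Longrightarrow> bt z l \<Longrightarrow> bt (app j B z) l = (l < j)" if "j \<le> n"
  using that
proof (induction j)
  case 0 then show ?case by simp
next
  case (Suc j)
  have jn: "j < n" using Suc by simp
  show ?case
  proof (cases "j < l")
    case True then show ?thesis using Suc by (auto simp: bit_xor_iff)
  next
    case False
    show ?thesis
    proof (cases "j = l")
      case True then show ?thesis using Suc jn by (auto simp: bit_xor_iff lou_def)
    next
      case F2: False
      then have "l < j" using False by simp
      then have "\<not> bt (B j) l" using Suc.prems(1) jn by (auto simp: lou_def)
      then show ?thesis using Suc \<open>l < j\<close> by (auto simp: bit_xor_iff)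
    qed
  qed
qed

lemma lou_ok:
  assumes l: "lou n B" and lt: "\<forall>k<n. B k < 2^n"
  shows "ok n B"
proof -
  have nz: "app n B z \<noteq> 0" if z: "z < 2^n" "z \<noteq> 0" for z
  proof -
    obtain i where "bt z i" using exists_bit[OF z(2)] by blast
    define l where "l = (LEAST i. bt z i)"
    have bl: "bt z l" using \<open>bt z i\<close> by (metis LeastI l_def)
    have ll: "\<forall>k<l. \<not> bt z k" using not_less_Least l_def by blast
    have ln: "l < n" using bl z lt2D by blast
    have "bt (app n B z) l" using lou_bit[OF _ l _ ll bl] ln by simp
    then show ?thesis by (cases "app n B z = 0") auto
  qed
  have "inj_on (app n B) {..<2^n}"
  proof (rule inj_onI)
    fix x y assume xy: "x \<in> {..<2^n}" "y \<in> {..<2^n}" "app n B x = app n B y"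
    have "app n B (x XOR y) = 0" using xy(3) by (simp add: app_xor)
    then have "x XOR y = 0" using nz[of "x XOR y"] xy by auto
    then show "x = y" by (metis xorx(1) xor.left_neutral)
  qed
  then show ?thesis using lt by (simp add: ok_def)
qed

lemma lowc_lou_id: "lowc n C \<Longrightarrow> lou n C \<Longrightarrow> k < n \<Longrightarrow> C k = 2^k"
  by (rule bit_eqI) (auto simp: lowc_def lou_def bit_exp_iff, metis linorder_neqE_nat)

lemma div_ceil: "1 \<le> m \<Longrightarrow> n \<le> ((n + m - 1) div m) * (m::nat)"
proof -
  assume m: "1 \<le> m"
  have "n + m - 1 = ((n + m - 1) div m) * m + (n + m - 1) mod m" by simp
  moreover have "(n + m - 1) mod m < m" using m by simp
  ultimately show ?thesis by linarith
qed

lemma pmh: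
  assumes o: "ok n A" and m: "1 \<le> m"
  shows "\<exists>os. vop n os \<and> length os \<le> 2 * ((n + m - 1) div m) * (n + m * (m + 2^m)) \<and> (\<forall>k<n. cxs os (A k) = 2^k)"
proof -
  define b where "b = (n + m - 1) div m"
  have bm: "n \<le> b * m" using div_ceil[OF m] by (simp add: b_def)
  obtain os1 where os1: "vop n os1" "length os1 \<le> b * (n + m * (m + 2^m))" "lowc (min (b*m) n) (aps os1 A)"
    using lower_pass[OF o m] by blast
  define A1 where "A1 = aps os1 A"
  have o1: "ok n A1" using ok_aps[OF os1(1) o] by (simp add: A1_def)
  have l1: "lowc n A1" using os1(3) bm by (simp add: A1_def min_absorb2)
  have A1lt: "\<forall>k<n. A1 k < 2^n" using o1 by (simp add: ok_def)
  define B where "B = (\<lambda>k. rv n (A1 (n - 1 - k)))"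
  have lB: "lou n B" unfolding lou_def B_def
  proof (rule allI, rule impI, rule conjI)
    fix k assume k: "k < n"
    show "bt (rv n (A1 (n - 1 - k))) k" using l1 k by (auto simp: bt_rv lowc_def)
    show "\<forall>r<k. \<not> bt (rv n (A1 (n - 1 - k))) r" using l1 k by (auto simp: bt_rv lowc_def)
  qed
  have oB: "ok n B" by (rule lou_ok[OF lB]) (simp add: B_def rv_lt)
  obtain os2 where os2: "vop n os2" "length os2 \<le> b * (n + m * (m + 2^m))" "lowc (min (b*m) n) (aps os2 B)" "lou n B \<longrightarrow> down os2"
    using lower_pass[OF oB m] by blast
  have l2: "lowc n (aps os2 B)" using os2(3) bm by (simp add: min_absorb2)
  have u2: "lou n (aps os2 B)" using lou_aps[of os2 n B] os2(4) lB by simp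
  have id2: "aps os2 B k = 2^k" if "k < n" for k using lowc_lou_id[OF l2 u2 that] .
  define os where "os = os1 @ map (rho2 n) os2"
  have "cxs os (A k) = 2^k" if k: "k < n" for k
  proof -
    have "cxs os (A k) = cxs (map (rho2 n) os2) (A1 k)" by (simp add: os_def cxs_append A1_def aps_cxs)
    also have "A1 k = rv n (B (n - 1 - k))" using k A1lt rv_rv by (simp add: B_def)
    also have "cxs (map (rho2 n) os2) (rv n (B (n - 1 - k))) = rv n (aps os2 B (n - 1 - k))"
      using cxs_rv[OF os2(1)] by (simp add: aps_cxs)
    also have "\<dots> = 2^k" using id2[of "n - 1 - k"] k by (simp add: rv_exp)
    finally show ?thesis .
  qed
  moreover have "vop n os" using os1(1) vop_rho[OF os2(1)] by (simp add: os_def)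
  moreover have "length os \<le> 2 * b * (n + m * (m + 2^m))" using os1(2) os2(2) by (simp add: os_def)
  ultimately show ?thesis by (auto simp: b_def)
qed

definition ccirc :: "nat \<Rightarrow> gate list \<Rightarrow> bool" where
  "ccirc n L = (\<forall>g\<in>set L. \<exists>c t. g = CNOT c t \<and> c < n \<and> t < n \<and> c \<noteq> t)"

lemma ccirc_append[simp]: "ccirc n (x @ y) = (ccirc n x \<and> ccirc n y)"
  by (auto simp: ccirc_def)

lemma ccirc_rev[simp]: "ccirc n (rev x) = ccirc n x"
  by (auto simp: ccirc_def)

lemma ccirc_wf: "ccirc n L \<Longrightarrow> wf_circuit n L"
  by (auto simp: ccirc_def wf_circuit_def wf_gate_def)

lemma fc_cxs: "fc (map (\<lambda>p. CNOT (fst p) (snd p)) os) (x, 0) = (cxs os x, 0)"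
  by (induction os arbitrary: x) (auto simp: cx_def)

lemma pmh_circ:
  assumes "ok n A" "1 \<le> m"
  shows "\<exists>L. ccirc n L \<and> length L \<le> 2 * ((n + m - 1) div m) * (n + m * (m + 2^m)) \<and> (\<forall>k<n. fc L (Xv k) = (A k, 0))"
proof -
  obtain os where os: "vop n os" "length os \<le> 2 * ((n + m - 1) div m) * (n + m * (m + 2^m))" "\<forall>k<n. cxs os (A k) = 2^k"
    using pmh[OF assms] by blast
  define L where "L = map (\<lambda>p. CNOT (fst p) (snd p)) (rev os)"
  have "fc L (Xv k) = (A k, 0)" if "k < n" for k
  proof -
    have "fc L (Xv k) = (cxs (rev os) (2^k), 0)" by (simp add: L_def Xv_def fc_cxs)
    also have "\<dots> = (cxs (rev os) (cxs os (A k)), 0)" using os(3) that by simp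
    also have "\<dots> = (A k, 0)" using cxs_rev[OF os(1)] by simp
    finally show ?thesis .
  qed
  moreover have "ccirc n L" using os(1) by (auto simp: L_def ccirc_def vop_def)
  ultimately show ?thesis using os(2) by (intro exI[of _ L]) (auto simp: L_def)
qed

definition symlin :: "nat \<Rightarrow> (nat \<Rightarrow> nat) \<Rightarrow> bool" where
  "symlin n f = ((\<forall>x y. f (x XOR y) = f x XOR f y) \<and> (\<forall>x. f x < 2^n) \<and>
     (\<forall>x y. x < 2^n \<longrightarrow> y < 2^n \<longrightarrow> par n (x AND f y) = par n (y AND f x)))"

definition Ph :: "(nat \<Rightarrow> nat) \<Rightarrow> nat \<times> nat \<Rightarrow> nat \<times> nat" where
  "Ph f v = (fst v, snd v XOR f (fst v))"

lemma par_dual: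
  assumes "c < n" "t < n" "c \<noteq> t"
  shows "par n (x AND cx t c z) = par n (cx c t x AND z)"
proof -
  have "x AND cx t c z = (cx c t x AND z) XOR (if bt z t \<and> bt x c then 2^c XOR 2^t else 0)"
    by (rule bit_eqI) (use assms in \<open>auto simp: bt_cx bit_and_iff bit_xor_iff bit_exp_iff\<close>)
  then show ?thesis using assms by (simp add: par_xor par_exp)
qed

lemma struct:
  "pcirc n 0 p \<Longrightarrow> \<exists>q f. ccirc n q \<and> symlin n f \<and> (\<forall>v. fc p v = Ph f (fc q v))"
proof (induction p rule: rev_induct)
  case Nil
  show ?case by (intro exI[of _ "[]"] exI[of _ "\<lambda>x. 0"]) (auto simp: ccirc_def symlin_def Ph_def)
next
  case (snoc g p)
  have pg: "pg n 0 g" and pp: "pcirc n 0 p" using snoc.prems by (auto simp: pcirc_def)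
  obtain q f where q: "ccirc n q" "symlin n f" "\<forall>v. fc p v = Ph f (fc q v)" using snoc.IH[OF pp] by blast
  have fl: "f (x XOR y) = f x XOR f y" "f x < 2^n" for x y using q(2) by (auto simp: symlin_def)
  have fs: "x < 2^n \<Longrightarrow> y < 2^n \<Longrightarrow> par n (x AND f y) = par n (y AND f x)" for x y using q(2) by (auto simp: symlin_def)
  show ?case
  proof (cases g)
    case (H k) then show ?thesis using pg by (simp add: pg_def)
  next
    case (S k)
    have kn: "k < n" using pg S by (simp add: pg_def)
    define f' where "f' x = f x XOR (if bt x k then 2^k else 0)" for x
    have "symlin n f'"
      unfolding symlin_def
    proof (intro conjI allI impI)
      fix x y
      show "f' (x XOR y) = f' x XOR f' y"
        by (rule bit_eqI) (auto simp: f'_def fl bit_xor_iff bit_exp_iff)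
      show "f' x < 2^n" using fl kn by (simp add: f'_def)
      assume xy: "x < 2^n" "y < 2^n"
      show "par n (x AND f' y) = par n (y AND f' x)"
        using fs[OF xy] kn by (auto simp: f'_def and_xor_distrib par_xor par_and_exp)
    qed
    moreover have "fc (p @ [g]) v = Ph f' (fc q v)" for v
    proof -
      obtain a b where ab: "fc q v = (a,b)" by (cases "fc q v")
      have "fc p v = (a, b XOR f a)" using spec[OF q(3), of v] ab by (simp add: Ph_def)
      then show ?thesis using S by (simp add: fc_append Ph_def f'_def ab xor.assoc)
    qed
    ultimately show ?thesis using q(1) by blast
  next
    case (CNOT c t)
    have ct: "c < n" "t < n" "c \<noteq> t" using pg CNOT by (auto simp: pg_def)
    define f' where "f' x = cx t c (f (cx c t x))" for x
    have "symlin n f'"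
      unfolding symlin_def
    proof (intro conjI allI impI)
      fix x y
      show "f' (x XOR y) = f' x XOR f' y" using ct by (simp add: f'_def cx_xor fl)
      show "f' x < 2^n" using fl ct by (simp add: f'_def)
      assume xy: "x < 2^n" "y < 2^n"
      have "par n (x AND f' y) = par n (cx c t x AND f (cx c t y))" using par_dual[OF ct] by (simp add: f'_def)
      also have "\<dots> = par n (cx c t y AND f (cx c t x))" using fs xy ct by simp
      also have "\<dots> = par n (y AND f' x)" using par_dual[OF ct] by (simp add: f'_def)
      finally show "par n (x AND f' y) = par n (y AND f' x)" .
    qed
    moreover have "fc (p @ [g]) v = Ph f' (fc (q @ [CNOT c t]) v)" for v
    proof -
      obtain a b where ab: "fc q v = (a,b)" by (cases "fc q v")
      have "fc p v = (a, b XOR f a)" using spec[OF q(3), of v] ab by (simp add: Ph_def)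
      then show ?thesis using CNOT ct by (simp add: fc_append Ph_def f'_def ab cx_xor)
    qed
    moreover have "ccirc n (q @ [CNOT c t])" using q(1) ct by (simp add: ccirc_def)
    ultimately show ?thesis by blast
  qed
qed

lemma lam_inner:
  assumes cl: "\<And>l. k < l \<Longrightarrow> l < n \<Longrightarrow> bt (cl l) l \<and> (\<forall>r<l. \<not> bt (cl l) r)"
    and kn: "k < n"
  shows "d \<le> n - Suc k \<Longrightarrow> \<exists>x. x < 2^n \<and> (\<forall>r < n - d. \<not> bt x r) \<and> (\<forall>l. n - d \<le> l \<longrightarrow> l < n \<longrightarrow> par n (x AND cl l) = B l)"
proof (induction d)
  case 0 then show ?case by (intro exI[of _ 0]) auto
next
  case (Suc d)
  then obtain x where x: "x < 2^n" "\<forall>r < n - d. \<not> bt x r" "\<forall>l. n - d \<le> l \<longrightarrow> l < n \<longrightarrow> par n (x AND cl l) = B l"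
    by auto
  define s where "s = n - Suc d"
  have sd: "n - d = Suc s" "k < s" "s < n" using Suc.prems kn by (auto simp: s_def)
  define x' where "x' = x XOR (if par n (x AND cl s) \<noteq> B s then 2^s else 0)"
  have cs: "bt (cl s) s" using cl[of s] sd by auto
  show ?case
  proof (intro exI conjI allI impI)
    show "x' < 2^n" using x(1) sd by (simp add: x'_def)
    fix r assume "r < n - Suc d"
    then show "\<not> bt x' r" using x(2) sd by (auto simp: x'_def bit_xor_iff bit_exp_iff s_def)
  next
    fix l assume l: "n - Suc d \<le> l" "l < n"
    show "par n (x' AND cl l) = B l"
    proof (cases "l = s")
      case True
      then show ?thesis using cs sd by (auto simp: x'_def and_xor_distrib2 par_xor par_exp_and)
    next
      case False
      then have ls: "s < l" using l by (simp add: s_def)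
      then have "\<not> bt (cl l) s" using cl[of l] sd l by auto
      then have "par n (x' AND cl l) = par n (x AND cl l)"
        by (auto simp: x'_def and_xor_distrib2 par_xor par_exp_and)
      then show ?thesis using x(3) l ls sd by auto
    qed
  qed
qed

lemma lam:
  "d \<le> n \<Longrightarrow> \<exists>cl. (\<forall>l. n - d \<le> l \<longrightarrow> l < n \<longrightarrow> cl l < 2^n \<and> bt (cl l) l \<and> (\<forall>r<l. \<not> bt (cl l) r)) \<and>
     (\<forall>l1 l2. n - d \<le> l1 \<longrightarrow> l1 < l2 \<longrightarrow> l2 < n \<longrightarrow> par n (cl l1 AND cl l2) = Bm l1 l2)"
proof (induction d)
  case 0 then show ?case by auto
next
  case (Suc d)
  then obtain cl where cl: "\<forall>l. n - d \<le> l \<longrightarrow> l < n \<longrightarrow> cl l < 2^n \<and> bt (cl l) l \<and> (\<forall>r<l. \<not> bt (cl l) r)"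
    "\<forall>l1 l2. n - d \<le> l1 \<longrightarrow> l1 < l2 \<longrightarrow> l2 < n \<longrightarrow> par n (cl l1 AND cl l2) = Bm l1 l2" by auto
  define k where "k = n - Suc d"
  have kd: "n - d = Suc k" "k < n" using Suc.prems by (auto simp: k_def)
  obtain x where x: "x < 2^n" "\<forall>r < n - (n - Suc k). \<not> bt x r"
      "\<forall>l. n - (n - Suc k) \<le> l \<longrightarrow> l < n \<longrightarrow> par n (x AND cl l) = Bm k l"
    using lam_inner[of k n cl "n - Suc k" "Bm k"] cl kd by fastforce
  have x2: "\<forall>r \<le> k. \<not> bt x r" using x(2) kd by auto
  define cl' where "cl' = cl(k := 2^k XOR x)"
  show ?case
  proof (intro exI conjI)
    show "\<forall>l. n - Suc d \<le> l \<longrightarrow> l < n \<longrightarrow> cl' l < 2^n \<and> bt (cl' l) l \<and> (\<forall>r<l. \<not> bt (cl' l) r)"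
    proof (intro allI impI)
      fix l assume l: "n - Suc d \<le> l" "l < n"
      have 1: "cl' l < 2^n" using cl(1) x(1) l kd by (cases "l = k") (auto simp: cl'_def k_def)
      have 2: "bt (cl' l) l" using cl(1) x2 l kd by (cases "l = k") (auto simp: cl'_def k_def bit_xor_iff bit_exp_iff)
      have 3: "\<forall>r<l. \<not> bt (cl' l) r" using cl(1) x2 l kd by (cases "l = k") (auto simp: cl'_def k_def bit_xor_iff bit_exp_iff)
      show "cl' l < 2^n \<and> bt (cl' l) l \<and> (\<forall>r<l. \<not> bt (cl' l) r)" using 1 2 3 by blast
    qed
  next
    show "\<forall>l1 l2. n - Suc d \<le> l1 \<longrightarrow> l1 < l2 \<longrightarrow> l2 < n \<longrightarrow> par n (cl' l1 AND cl' l2) = Bm l1 l2"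
    proof (intro allI impI)
    fix l1 l2 assume l: "n - Suc d \<le> l1" "l1 < l2" "l2 < n"
    show "par n (cl' l1 AND cl' l2) = Bm l1 l2"
    proof (cases "l1 = k")
      case True
      have "\<not> bt (cl l2) k" using cl(1) l True kd by auto
      then show ?thesis using True l x(3) kd
        by (auto simp: cl'_def and_xor_distrib2 par_xor par_exp_and)
    next
      case False
      then show ?thesis using cl(2) l kd by (auto simp: cl'_def k_def)
    qed
    qed
  qed
qed

lemma ccirc_X: "ccirc n q \<Longrightarrow> snd (fc q (a, 0)) = 0"
proof (induction q arbitrary: a)
  case Nil then show ?case by simp
next
  case (Cons g q)
  then obtain c t where g: "g = CNOT c t" "ccirc n q" by (auto simp: ccirc_def)
  have "fg g (a, 0) = (cx c t a, 0)" using g by (simp add: cx_def)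
  then show ?case using Cons g by simp
qed

lemma ccirc_Z: "ccirc n q \<Longrightarrow> fst (fc q (0, b)) = 0"
proof (induction q arbitrary: b)
  case Nil then show ?case by simp
next
  case (Cons g q)
  then obtain c t where g: "g = CNOT c t" "ccirc n q" by (auto simp: ccirc_def)
  have "fg g (0, b) = (0, cx t c b)" using g by (simp add: cx_def)
  then show ?case using Cons g by simp
qed

lemma lin_app:
  assumes lin: "\<And>x y. f (x XOR y) = f x XOR f y" and a: "a < 2^n"
  shows "f a = app n (\<lambda>k. f (2^k)) a"
proof -
  have f0: "f 0 = 0" using lin[of 0 0] by simp
  have "k \<le> n \<Longrightarrow> f (ob k (bt a)) = app k (\<lambda>k. f (2^k)) a" for k
  proof (induction k)
    case 0 then show ?case using f0 by simp
  next
    case (Suc k)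
    then show ?case using f0 by (simp add: lin)
  qed
  from this[of n] show ?thesis using a by (simp add: ob_self)
qed

lemma ccirc_app:
  assumes q: "ccirc n q" and a: "a < 2^n"
  shows "fc q (a, 0) = (app n (\<lambda>k. fst (fc q (Xv k))) a, 0)"
proof -
  define fX where "fX x = fst (fc q (x, 0))" for x
  have w: "wf_circuit n q" using ccirc_wf[OF q] .
  have lin: "fX (x XOR y) = fX x XOR fX y" for x y
    using fc_lin[OF w, of "(x,0)" "(y,0)"] by (simp add: fX_def vxor_def)
  have "fX a = app n (\<lambda>k. fX (2^k)) a" by (rule lin_app[OF lin a])
  then show ?thesis using ccirc_X[OF q, of a] by (simp add: fX_def Xv_def prod_eq_iff)
qed

lemma ccirc_ok:
  assumes q: "ccirc n q"
  shows "ok n (\<lambda>k. fst (fc q (Xv k)))"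
proof -
  have w: "wf_circuit n q" using ccirc_wf[OF q] .
  have lt: "\<forall>k<n. fst (fc q (Xv k)) < 2^n" using fc_lt[OF w] by (simp add: Xv_def)
  have "inj_on (app n (\<lambda>k. fst (fc q (Xv k)))) {..<2^n}"
  proof (rule inj_onI)
    fix x y assume xy: "x \<in> {..<2^n}" "y \<in> {..<2^n}" "app n (\<lambda>k. fst (fc q (Xv k))) x = app n (\<lambda>k. fst (fc q (Xv k))) y"
    then have "fc q (x, 0) = fc q (y, 0)" using ccirc_app[OF q] by simp
    then have "fc (rev q) (fc q (x, 0)) = fc (rev q) (fc q (y, 0))" by simp
    then show "x = y" using fc_rev[OF w] by simp
  qed
  then show ?thesis using lt by (simp add: ok_def)
qed

lemma ccirc_eq:
  assumes q: "ccirc n q" and q': "ccirc n q'" and X: "\<forall>k<n. fc q (Xv k) = fc q' (Xv k)" and v: "vlt n v"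
  shows "fc q v = fc q' v"
proof -
  have w: "wf_circuit n q" and w': "wf_circuit n q'" using ccirc_wf q q' by auto
  define f where "f x = fc (rev q') (fc q x)" for x
  have lin: "f (vxor x y) = vxor (f x) (f y)" for x y using fc_lin w w' by (simp add: f_def)
  have fx: "f (Xv k) = Xv k" if "k < n" for k using X that fc_rev[OF w'] by (simp add: f_def)
  have fz: "f (Zv k) = Zv k" if k: "k < n" for k
  proof -
    obtain z where z: "fc q (0, 2^k) = (0, z)" using ccirc_Z[OF q, of "2^k"] by (metis prod.collapse)
    have f0: "fst (f (Zv k)) = 0" unfolding f_def Zv_def z
      using ccirc_Z[of n "rev q'"] q' by simp
    have lt: "snd (f (Zv k)) < 2^n" using fc_lt[of n "rev q'"] fc_lt[OF w, of 0 "2^k"] w' k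
      by (simp add: f_def Zv_def) (metis prod.collapse)
    have "bt (snd (f (Zv k))) j = (j = k)" if j: "j < n" for j
    proof -
      have "om n (f (Zv k)) (f (Xv j)) = om n (Zv k) (Xv j)"
        using om_fc[OF w, of "Zv k" "Xv j"] om_fc[of n "rev q'"] w' by (simp add: f_def)
      then have "om n (f (Zv k)) (Xv j) = om n (Zv k) (Xv j)" using fx[OF j] by simp
      then show ?thesis using om_X[OF j] j by (simp add: Zv_def bit_exp_iff)
    qed
    then have "snd (f (Zv k)) = 2^k" using lt k by (intro bit_eq_lt) (auto simp: bit_exp_iff)
    then show ?thesis using f0 by (simp add: Zv_def prod_eq_iff)
  qed
  have "f v = v" by (rule gen_fix[OF lin fx fz v])
  then have "fc q' (f v) = fc q' v" by simp
  then show ?thesis using fc_rev2[OF w'] by (simp add: f_def)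
qed

lemma Zdual:
  assumes L: "ccirc n L" and cl: "\<forall>k<n. fc L (Xv k) = (cl k, 0)" and y: "y < 2^n"
  shows "fc (rev L) (0, y) = (0, ob n (\<lambda>k. par n (y AND cl k)))"
proof -
  have w: "wf_circuit n L" using ccirc_wf[OF L] .
  define z where "z = snd (fc (rev L) (0, y))"
  have f0: "fst (fc (rev L) (0, y)) = 0" using ccirc_Z[of n "rev L"] L by simp
  have e: "fc (rev L) (0, y) = (0, z)" using f0 by (simp add: z_def prod_eq_iff)
  have zlt: "z < 2^n" using fc_lt[of n "rev L" 0 y] w y by (simp add: z_def)
  have bz: "bt z k = par n (y AND cl k)" if k: "k < n" for k
  proof -
    have "om n (fc L (0, z)) (fc L (Xv k)) = om n (0, z) (Xv k)" using om_fc[OF w] by simp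
    moreover have "fc L (0, z) = (0, y)" using fc_rev2[OF w, of "(0,y)"] e by simp
    ultimately have "om n (0, y) (cl k, 0) = bt z k" using cl k om_X[OF k, of "(0,z)"] by simp
    then show ?thesis by (simp add: om_def omv_def)
  qed
  have "z = ob n (\<lambda>k. par n (y AND cl k))"
    by (rule bit_eq_lt[OF zlt ob_lt]) (simp add: bz bt_ob)
  then show ?thesis using e by simp
qed

lemma fc_Ss: "distinct ks \<Longrightarrow> fc (map S ks) (x, y) = (x, y XOR (x AND xl ks))"
proof (induction ks arbitrary: y)
  case Nil then show ?case by simp
next
  case (Cons k ks)
  have "fg (S k) (x, y) = (x, y XOR (x AND 2^k))"
    by (rule pair_bit_eqI) (auto simp: bit_xor_iff bit_and_iff bit_exp_iff)
  then show ?case using Cons by (simp add: and_xor_distrib xor.assoc)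
qed

lemma par_cong: "(\<forall>k<n. bt x k = bt y k) \<Longrightarrow> par n x = par n y"
  by (induction n) auto

lemma par_app: "par N (app n A a AND y) = par n (a AND ob n (\<lambda>l. par N (A l AND y)))"
proof (induction n)
  case 0 then show ?case by simp
next
  case (Suc n)
  have "par n (a AND ob (Suc n) (\<lambda>l. par N (A l AND y))) = par n (a AND ob n (\<lambda>l. par N (A l AND y)))"
    by (rule par_cong) (auto simp: bit_and_iff bt_ob bit_xor_iff bit_exp_iff)
  then show ?case using Suc by (auto simp: and_xor_distrib2 par_xor bit_and_iff bt_ob bit_xor_iff bit_exp_iff)
qed

lemma Lgadget:
  assumes L: "ccirc n L" and cl: "\<forall>k<n. fc L (Xv k) = (cl k, 0)" and cllt: "\<forall>k<n. cl k < 2^n"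
    and v: "a < 2^n" "b < 2^n"
  shows "fc (L @ map S [0..<n] @ rev L) (a, b) = (a, b XOR ob n (\<lambda>k. par n (app n cl a AND cl k)))"
proof -
  have w: "wf_circuit n L" using ccirc_wf[OF L] .
  have clX: "(\<lambda>k. fst (fc L (Xv k))) = (\<lambda>k. if k < n then cl k else fst (fc L (Xv k)))" using cl by auto
  have appeq: "app n (\<lambda>k. fst (fc L (Xv k))) a = app n cl a"
  proof -
    have "\<And>j. j \<le> n \<Longrightarrow> app j (\<lambda>k. fst (fc L (Xv k))) a = app j cl a"
    proof -
      fix j show "j \<le> n \<Longrightarrow> app j (\<lambda>k. fst (fc L (Xv k))) a = app j cl a"
        by (induction j) (use cl in auto)
    qed
    then show ?thesis by simp
  qed
  have LX: "fc L (a, 0) = (app n cl a, 0)" using ccirc_app[OF L v(1)] appeq by simp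
  obtain b' where LZ: "fc L (0, b) = (0, b')" using ccirc_Z[OF L, of b] by (metis prod.collapse)
  have Lab: "fc L (a, b) = (app n cl a, b')"
    using fc_lin[OF w, of "(a,0)" "(0,b)"] LX LZ by (simp add: vxor_def)
  have applt: "app n cl a < 2^n" using app_lt cllt by blast
  have xlid: "app n cl a AND xl [0..<n] = app n cl a"
    by (rule bit_eqI) (use applt in \<open>auto simp: bit_and_iff bt_xl dest: lt2D\<close>)
  have S: "fc (map S [0..<n]) (app n cl a, b') = (app n cl a, b' XOR app n cl a)"
    by (simp add: fc_Ss xlid)
  have "fc (rev L) (app n cl a, b' XOR app n cl a) = vxor (fc (rev L) (app n cl a, b')) (fc (rev L) (0, app n cl a))"
    using fc_lin[of n "rev L" "(app n cl a, b')" "(0, app n cl a)"] w by (simp add: vxor_def)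
  also have "fc (rev L) (app n cl a, b') = (a, b)" using fc_rev[OF w, of "(a,b)"] Lab by simp
  also have "fc (rev L) (0, app n cl a) = (0, ob n (\<lambda>k. par n (app n cl a AND cl k)))"
    by (rule Zdual[OF L cl applt])
  finally show ?thesis using Lab S by (simp add: fc_append vxor_def)
qed

lemma and_lt2: "(x::nat) < 2^n \<Longrightarrow> x AND y < 2^n"
  by (rule lt2I) (auto simp: bit_and_iff dest: lt2D)

definition pbd :: "nat \<Rightarrow> nat \<Rightarrow> nat" where
  "pbd n m = 2 * ((n + m - 1) div m) * (n + m * (m + 2^m))"

lemma compress:
  assumes p: "pcirc n 0 p" and m: "1 \<le> m"
  shows "\<exists>p'. wf_circuit n p' \<and> length p' \<le> 3 * pbd n m + 2 * n \<and> (\<forall>v. vlt n v \<longrightarrow> fc p' v = fc p v)"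
proof -
  obtain q f where q: "ccirc n q" "symlin n f" "\<forall>v. fc p v = Ph f (fc q v)" using struct[OF p] by blast
  have flin: "f (x XOR y) = f x XOR f y" "f x < 2^n" for x y using q(2) by (auto simp: symlin_def)
  have fs: "x < 2^n \<Longrightarrow> y < 2^n \<Longrightarrow> par n (x AND f y) = par n (y AND f x)" for x y using q(2) by (auto simp: symlin_def)
  have wq: "wf_circuit n q" using ccirc_wf[OF q(1)] .
  obtain q' where q': "ccirc n q'" "length q' \<le> pbd n m" "\<forall>k<n. fc q' (Xv k) = (fst (fc q (Xv k)), 0)"
    using pmh_circ[OF ccirc_ok[OF q(1)] m] by (auto simp: pbd_def)
  have qq': "fc q' v = fc q v" if "vlt n v" for v
  proof -
    have "\<forall>k<n. fc q (Xv k) = fc q' (Xv k)"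
      using q'(3) ccirc_X[OF q(1)] by (auto simp: Xv_def prod_eq_iff)
    then show ?thesis using ccirc_eq[OF q(1) q'(1) _ that] by simp
  qed
  define Bm where "Bm l1 l2 = bt (f (2^l2)) l1" for l1 l2
  obtain cl where cl: "\<forall>l. n - n \<le> l \<longrightarrow> l < n \<longrightarrow> cl l < 2^n \<and> bt (cl l) l \<and> (\<forall>r<l. \<not> bt (cl l) r)"
      "\<forall>l1 l2. n - n \<le> l1 \<longrightarrow> l1 < l2 \<longrightarrow> l2 < n \<longrightarrow> par n (cl l1 AND cl l2) = Bm l1 l2"
    using lam[of n n Bm] by blast
  have lou: "lou n cl" using cl(1) by (simp add: lou_def)
  have cllt: "\<forall>k<n. cl k < 2^n" using cl(1) by simp
  obtain L where L: "ccirc n L" "length L \<le> pbd n m" "\<forall>k<n. fc L (Xv k) = (cl k, 0)"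
    using pmh_circ[OF lou_ok[OF lou cllt] m] by (auto simp: pbd_def)
  define d where "d k = (par n (cl k AND cl k) \<noteq> bt (f (2^k)) k)" for k
  define ks where "ks = filter d [0..<n]"
  have dks: "distinct ks" by (simp add: ks_def)
  have kset: "k \<in> set ks \<longleftrightarrow> d k \<and> k < n" for k by (auto simp: ks_def)
  define w where "w k = ob n (\<lambda>l. par n (cl l AND cl k))" for k
  have symbit: "bt (f (2^l)) k = bt (f (2^k)) l" if "k < n" "l < n" for k l
    using fs[of "2^k" "2^l"] that by (simp add: par_exp_and)
  have fk: "f (2^k) = w k XOR (if d k then 2^k else 0)" if k: "k < n" for k
  proof (rule bit_eq_lt)
    show "f (2^k) < 2^n" by (rule flin)
    show "w k XOR (if d k then 2^k else 0) < 2^n" using k by (simp add: w_def ob_lt)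
    fix l assume l: "l < n"
    have "bt (f (2^k)) l = (par n (cl l AND cl k) \<noteq> (d k \<and> l = k))"
    proof (cases "l < k")
      case True then show ?thesis using cl(2) k by (auto simp: Bm_def)
    next
      case False
      show ?thesis
      proof (cases "l = k")
        case True then show ?thesis by (auto simp: d_def)
      next
        case F2: False
        then have "k < l" using False by simp
        then have "par n (cl k AND cl l) = bt (f (2^l)) k" using cl(2) l by (auto simp: Bm_def)
        then show ?thesis using symbit[OF k l] F2 by (simp add: and.commute)
      qed
    qed
    then show "bt (f (2^k)) l = bt (w k XOR (if d k then 2^k else 0)) l"
      using l by (auto simp: w_def bt_ob bit_xor_iff bit_exp_iff)
  qed
  have key: "ob n (\<lambda>k. par n (app n cl a AND cl k)) XOR (a AND xl ks) = f a" if a: "a < 2^n" for a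
  proof (rule bit_eq_lt)
    show "ob n (\<lambda>k. par n (app n cl a AND cl k)) XOR (a AND xl ks) < 2^n"
      using xor_lt[OF ob_lt and_lt2[OF a]] .
    show "f a < 2^n" by (rule flin)
    fix k assume k: "k < n"
    have "bt (f a) k = par n (2^k AND f a)" using k by (simp add: par_exp_and)
    also have "\<dots> = par n (a AND f (2^k))" using fs[of "2^k" a] a k by simp
    also have "\<dots> = (par n (a AND w k) \<noteq> (d k \<and> bt a k))"
      using k by (simp add: fk and_xor_distrib par_xor par_and_exp)
    also have "par n (a AND w k) = par n (app n cl a AND cl k)" by (simp add: par_app w_def)
    finally show "bt (ob n (\<lambda>k. par n (app n cl a AND cl k)) XOR (a AND xl ks)) k = bt (f a) k"
      using k by (auto simp: bt_ob bit_xor_iff bit_and_iff bt_xl[OF dks] kset)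
  qed
  define p' where "p' = q' @ (L @ map S [0..<n] @ rev L) @ map S ks"
  have wp': "wf_circuit n p'" using ccirc_wf[OF q'(1)] ccirc_wf[OF L(1)]
    by (auto simp: p'_def wf_circuit_def wf_gate_def kset)
  have len: "length p' \<le> 3 * pbd n m + 2 * n"
  proof -
    have "length ks \<le> n" using length_filter_le[of d "[0..<n]"] by (simp add: ks_def)
    then show ?thesis using q'(2) L(2) by (simp add: p'_def)
  qed
  have eq: "fc p' v = fc p v" if v: "vlt n v" for v
  proof -
    obtain a b where ab: "fc q v = (a, b)" by (cases "fc q v")
    have abl: "a < 2^n" "b < 2^n" using vlt_fc[OF wq v] ab by (auto simp: vlt_def)
    have "fc p' v = fc (map S ks) (fc (L @ map S [0..<n] @ rev L) (a, b))"
      using qq'[OF v] ab by (simp add: p'_def fc_append)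
    also have "\<dots> = (a, (b XOR ob n (\<lambda>k. par n (app n cl a AND cl k))) XOR (a AND xl ks))"
      using Lgadget[OF L(1) L(3) cllt abl] by (simp add: fc_Ss[OF dks])
    also have "\<dots> = (a, b XOR f a)" using key[OF abl(1)] by (simp add: xor.assoc)
    also have "\<dots> = fc p v" using spec[OF q(3), of v] ab by (simp add: Ph_def)
    finally show ?thesis .
  qed
  show ?thesis using wp' len eq by blast
qed

lemma short_circuit:
  assumes wc: "wf_circuit n c" and m: "1 \<le> m"
  shows "\<exists>c'. wf_circuit n c' \<and> equiv_circuits n c c' \<and> length c' \<le> 6 * pbd n m + 11 * n"
proof -
  obtain p1 hs p2 where P: "pcirc n 0 p1" "pcirc n 0 p2" "hlay n 0 hs" "length hs \<le> n - 0"
      "\<forall>v. vlt n v \<longrightarrow> fc c v = fc (p2 @ hs @ p1) v"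
    using peel[of 0 n c] wc by auto
  obtain p1' where p1': "wf_circuit n p1'" "length p1' \<le> 3 * pbd n m + 2 * n" "\<forall>v. vlt n v \<longrightarrow> fc p1' v = fc p1 v"
    using compress[OF P(1) m] by blast
  obtain p2' where p2': "wf_circuit n p2'" "length p2' \<le> 3 * pbd n m + 2 * n" "\<forall>v. vlt n v \<longrightarrow> fc p2' v = fc p2 v"
    using compress[OF P(2) m] by blast
  have whs: "wf_circuit n hs" using P(3) by (auto simp: hlay_def wf_circuit_def wf_gate_def)
  define d where "d = p2' @ hs @ p1'"
  have wd: "wf_circuit n d" using p1'(1) p2'(1) whs by (simp add: d_def)
  have eqd: "fc c v = fc d v" if v: "vlt n v" for v
  proof -
    have w2: "vlt n (fc p2 v)" using vlt_fc[OF pcirc_wf[OF P(2)] v] .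
    have w3: "vlt n (fc hs (fc p2 v))" using vlt_fc[OF whs w2] .
    have "fc c v = fc p1 (fc hs (fc p2 v))" using mp[OF spec[OF P(5), of v] v] by (simp add: fc_append)
    also have "\<dots> = fc d v"
      using mp[OF spec[OF p2'(3), of v] v] mp[OF spec[OF p1'(3), of "fc hs (fc p2 v)"] w3]
      by (simp add: d_def fc_append)
    finally show ?thesis .
  qed
  have vx: "vlt n (Xv q)" "vlt n (Zv q)" if "q < n" for q using that by (auto simp: vlt_def Xv_def Zv_def)
  have tX: "\<And>q. q < n \<Longrightarrow> fc c (Xv q) = fc d (Xv q)" using eqd vx by blast
  have tZ: "\<And>q. q < n \<Longrightarrow> fc c (Zv q) = fc d (Zv q)" using eqd vx by blast
  obtain pc where pc: "wf_circuit n pc" "length pc \<le> 6 * n" "equiv_circuits n c (pc @ d)"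
    using equiv_of_tableau[OF wc wd tX[unfolded Xv_def] tZ[unfolded Zv_def]] by blast
  have "length (pc @ d) \<le> 6 * pbd n m + 11 * n"
    using pc(2) p1'(2) p2'(2) P(4) by (simp add: d_def)
  moreover have "wf_circuit n (pc @ d)" using pc(1) wd by simp
  ultimately show ?thesis using pc(3) by blast
qed

lemma ln4: "ln (4::real) \<le> 3"
  using ln_le_minus_one[of "4::real"] by simp

lemma arith_bound:
  assumes n: "2 \<le> n"
  shows "\<exists>m\<ge>1. real (6 * pbd n m + 11 * n) \<le> 500 * real n ^ 2 / ln (real n)"
proof -
  have ex: "\<exists>k. n < 4^(Suc k)"
  proof
    have "n < 2^n" by (rule less_exp)
    also have "(2::nat)^n \<le> 4^n" by (rule power_mono) auto
    also have "(4::nat)^n \<le> 4^(Suc n)" by simp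
    finally show "n < 4^(Suc n)" .
  qed
  define k0 where "k0 = (LEAST k. n < 4^(Suc k))"
  have A: "n < 4^(Suc k0)" unfolding k0_def by (rule LeastI_ex[OF ex])
  have B: "4^k0 \<le> n" if "1 \<le> k0"
  proof -
    have "k0 - 1 < k0" using that by simp
    then have "\<not> n < 4^(Suc (k0 - 1))" unfolding k0_def by (rule not_less_Least)
    then show ?thesis using that by simp
  qed
  define m where "m = max 1 k0"
  have m1: "1 \<le> m" by (simp add: m_def)
  have pw: "(4::nat)^j = 2^j * 2^j" for j
  proof -
    have "(4::nat)^j = (2*2)^j" by simp
    also have "\<dots> = 2^j * 2^j" by (rule power_mult_distrib)
    finally show ?thesis .
  qed
  have mle: "m \<le> 2^m" using less_exp[of m] by simp
  have mn: "m \<le> n"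
  proof (cases "1 \<le> k0")
    case True
    then have "m = k0" by (simp add: m_def)
    moreover have "k0 \<le> 2^k0 * 2^k0"
    proof -
      have "k0 \<le> 2^k0" using less_exp[of k0] by simp
      also have "(2::nat)^k0 \<le> 2^k0 * 2^k0" by simp
      finally show ?thesis .
    qed
    ultimately show ?thesis using B[OF True] pw[of k0] by simp
  next
    case False then show ?thesis using n by (simp add: m_def)
  qed
  have mm: "m * (m + 2^m) \<le> 2 * n"
  proof (cases "1 \<le> k0")
    case True
    then have mk: "m = k0" by (simp add: m_def)
    have a: "m * m \<le> 2^m * 2^m" by (rule mult_le_mono[OF mle mle])
    have b: "m * 2^m \<le> 2^m * 2^m" using mle by (rule mult_le_mono1)
    have c: "2^m * 2^m \<le> n" using B[OF True] pw[of k0] mk by simp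
    have e: "m * (m + 2^m) = m * m + m * 2^m" by (simp add: algebra_simps)
    show ?thesis unfolding e using a b c by linarith
  next
    case False
    then have "m = 1" by (simp add: m_def)
    then show ?thesis using n by simp
  qed
  have dv: "(n + m - 1) div m * m \<le> n + m - 1" by (simp add: div_times_less_eq_dividend)
  have X: "n + m * (m + 2^m) \<le> 3 * n" using mm by simp
  have PB: "pbd n m * m \<le> 12 * n^2"
  proof -
    have "pbd n m * m = 2 * ((n + m - 1) div m * m) * (n + m * (m + 2^m))"
      by (simp add: pbd_def algebra_simps)
    also have "\<dots> \<le> 2 * (2 * n) * (3 * n)"
    proof -
      have "(n + m - 1) div m * m \<le> 2 * n" using dv mn by linarith
      then show ?thesis by (rule mult_le_mono[OF mult_le_mono[OF le_refl] X])
    qed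
    also have "\<dots> = 12 * n^2" by (simp add: power2_eq_square)
    finally show ?thesis .
  qed
  define T where "T = 6 * pbd n m + 11 * n"
  have Tm: "T * m \<le> 83 * n^2"
  proof -
    have "T * m = 6 * (pbd n m * m) + 11 * (n * m)" by (simp add: T_def algebra_simps)
    also have "\<dots> \<le> 6 * (12 * n^2) + 11 * (n * n)" by (rule add_mono[OF mult_le_mono[OF le_refl PB] mult_le_mono[OF le_refl mult_le_mono[OF le_refl mn]]])
    also have "\<dots> = 83 * n^2" by (simp add: power2_eq_square)
    finally show ?thesis .
  qed
  have "real (T * m) \<le> real (83 * n^2)" using Tm by (simp only: of_nat_le_iff)
  then have Tmr: "real T * real m \<le> 83 * real n ^ 2" by simp
  have npos: "(0::real) < real n" using n by simp
  have lnpos: "0 < ln (real n)" using n by simp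
  have lnm: "ln (real n) \<le> 6 * real m"
  proof -
    have "ln (real n) < ln (real (4^(Suc k0)))" using A npos by (simp del: power_Suc)
    also have "ln (real (4^(Suc k0))) = real (Suc k0) * ln 4" by (simp add: ln_realpow del: power_Suc)
    also have "\<dots> \<le> real (Suc k0) * 3" using ln4 by (intro mult_left_mono) auto
    also have "\<dots> \<le> 6 * real m"
    proof (cases "1 \<le> k0")
      case True then show ?thesis by (simp add: m_def)
    next
      case False then show ?thesis by (simp add: m_def)
    qed
    finally show ?thesis by simp
  qed
  have "real T * ln (real n) \<le> real T * (6 * real m)" by (rule mult_left_mono[OF lnm]) simp
  also have "\<dots> = 6 * (real T * real m)" by simp
  also have "\<dots> \<le> 6 * (83 * real n ^ 2)" using Tmr by simp
  also have "\<dots> \<le> 500 * real n ^ 2" by simp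
  finally have "real T * ln (real n) \<le> 500 * real n ^ 2" .
  then have "real T \<le> 500 * real n ^ 2 / ln (real n)" using lnpos by (simp add: pos_le_divide_eq)
  then show ?thesis using m1 by (auto simp: T_def)
qed

theorem corollary9:
  shows "\<exists>C::real. C > 0 \<and> (\<forall>n::nat. n \<ge> 2 \<longrightarrow> (\<forall>c. wf_circuit n c \<longrightarrow>
     (\<exists>c'. wf_circuit n c' \<and> equiv_circuits n c c' \<and>
           real (length c') \<le> C * real n ^ 2 / ln (real n))))"
proof (intro exI[of _ 500] conjI allI impI)
  fix n :: nat and c assume n: "2 \<le> n" and wc: "wf_circuit n c"
  obtain m where m: "1 \<le> m" "real (6 * pbd n m + 11 * n) \<le> 500 * real n ^ 2 / ln (real n)"
    using arith_bound[OF n] by blast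
  obtain c' where c': "wf_circuit n c'" "equiv_circuits n c c'" "length c' \<le> 6 * pbd n m + 11 * n"
    using short_circuit[OF wc m(1)] by blast
  have "real (length c') \<le> real (6 * pbd n m + 11 * n)" using c'(3) by linarith
  then show "\<exists>c'. wf_circuit n c' \<and> equiv_circuits n c c' \<and> real (length c') \<le> 500 * real n ^ 2 / ln (real n)"
    using c' m(2) by (intro exI[of _ c']) auto
qed simp

end
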